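(* Let $n\ge3$. The singular locus of the triangle space $\mathcal F_{3,n}$ consists exactly of the maximally degenerate triangles, i.e. the points $(p_1,p_2,p_3,l_1,l_2,l_3,P)$ with $p_1=p_2=p_3$ and $l_1=l_2=l_3$.
   Context: $\mathcal F_{3,n}$ is the variety of 7-tuples $(p_1,p_2,p_3,l_1,l_2,l_3,P)$ of points $p_i$, lines $l_j$ and a plane $P$ in $\mathbb P^{n-1}_{\mathbb C}$ such that $p_i\in l_j$ for all $i\neq j$ and $l_j\subset P$ for all $j$; it is a closed subvariety of $(\mathbb P^{n-1})^3\times\mathrm{Gr}(2,\mathbb C^n)^3\times\mathrm{Gr}(3,\mathbb C^n)$ and equals the closure of the $GL(n,\mathbb C)$-orbit of the coordinate triangle. *)

theory Defs
  imports "HOL-Analysis.Analysis" "HOL-Library.Numeral_Type"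
begin

text \<open>Points of Gr(k, C^n): complex-linear subspaces of complex^'n of complex dimension k.
  Projective space P^(n-1) is Gr 1.\<close>
definition Grass :: "nat \<Rightarrow> (complex^'n::finite) set set" where
  "Grass k = {V. vec.subspace V \<and> vec.dim V = k}"

type_synonym 'n triangle =
  "(complex^'n) set \<times> (complex^'n) set \<times> (complex^'n) set \<times>
   (complex^'n) set \<times> (complex^'n) set \<times> (complex^'n) set \<times> (complex^'n) set"

definition triangle_space :: "'n::finite triangle set" where
  "triangle_space = {(p1,p2,p3,l1,l2,l3,P).
     p1 \<in> Grass 1 \<and> p2 \<in> Grass 1 \<and> p3 \<in> Grass 1 \<and>
     l1 \<in> Grass 2 \<and> l2 \<in> Grass 2 \<and> l3 \<in> Grass 2 \<and> P \<in> Grass 3 \<and>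
     p2 \<subseteq> l1 \<and> p3 \<subseteq> l1 \<and> p1 \<subseteq> l2 \<and> p3 \<subseteq> l2 \<and> p1 \<subseteq> l3 \<and> p2 \<subseteq> l3 \<and>
     l1 \<subseteq> P \<and> l2 \<subseteq> P \<and> l3 \<subseteq> P}"

text \<open>Frames: 12-tuples of vectors (v1,v2,v3, a1,b1, a2,b2, a3,b3, c1,c2,c3), an element of the
  complex vector space E = (complex^'n)^12 (indices 0..11).\<close>
type_synonym 'n frame = "complex^'n^12"

definition cscale :: "complex \<Rightarrow> 'n::finite frame \<Rightarrow> 'n frame" where
  "cscale c x = (\<chi> i. c *s (x $ i))"

definition frame_dom :: "'n::finite frame set" where
  "frame_dom = {x. x$0 \<noteq> 0 \<and> x$1 \<noteq> 0 \<and> x$2 \<noteq> 0 \<and>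
     vec.independent {x$3, x$4} \<and> x$3 \<noteq> x$4 \<and>
     vec.independent {x$5, x$6} \<and> x$5 \<noteq> x$6 \<and>
     vec.independent {x$7, x$8} \<and> x$7 \<noteq> x$8 \<and>
     vec.independent {x$9, x$10, x$11} \<and> card {x$9, x$10, x$11} = 3}"

definition frame_proj :: "'n::finite frame \<Rightarrow> 'n triangle" where
  "frame_proj x = (vec.span {x$0}, vec.span {x$1}, vec.span {x$2},
     vec.span {x$3, x$4}, vec.span {x$5, x$6}, vec.span {x$7, x$8},
     vec.span {x$9, x$10, x$11})"

definition csubspace :: "'n::finite frame set \<Rightarrow> bool" where
  "csubspace T \<longleftrightarrow> 0 \<in> T \<and> (\<forall>x\<in>T. \<forall>y\<in>T. x + y \<in> T) \<and> (\<forall>c. \<forall>x\<in>T. cscale c x \<in> T)"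

definition holomorphic_map_on :: "('n::finite frame \<Rightarrow> 'n frame) \<Rightarrow> 'n frame set \<Rightarrow> bool" where
  "holomorphic_map_on h W \<longleftrightarrow> (\<forall>z\<in>W. \<exists>L. (h has_derivative L) (at z) \<and>
      (\<forall>c v. L (cscale c v) = cscale c (L v)))"

definition complex_submanifold_at :: "'n::finite frame set \<Rightarrow> 'n frame \<Rightarrow> bool" where
  "complex_submanifold_at S y \<longleftrightarrow> y \<in> S \<and>
     (\<exists>U W T T' h. open U \<and> y \<in> U \<and> open W \<and> csubspace T \<and> csubspace T' \<and>
        T \<inter> T' = {0} \<and> holomorphic_map_on h W \<and> (\<forall>t\<in>T \<inter> W. h t \<in> T') \<and>
        S \<inter> U = {t + h t | t. t \<in> T \<inter> W} \<inter> U)"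

text \<open>A point x of F_{3,n} is smooth iff the preimage of F_{3,n} in the frame space
  (a holomorphic principal bundle over the ambient product of Grassmannians) is a complex
  submanifold near some frame over x.\<close>
definition smooth_point :: "'n::finite triangle \<Rightarrow> bool" where
  "smooth_point x \<longleftrightarrow> (\<exists>y\<in>frame_dom. frame_proj y = x \<and>
     complex_submanifold_at {z \<in> frame_dom. frame_proj z \<in> triangle_space} y)"

definition singular_locus :: "'n::finite triangle set" where
  "singular_locus = {x \<in> triangle_space. \<not> smooth_point x}"

end

theory Submission
  imports Defs
begin

definition hol :: "'n::finite frame set \<Rightarrow> ('n frame \<Rightarrow> complex) \<Rightarrow> bool" where
  "hol W f \<longleftrightarrow> (\<forall>z\<in>W. \<exists>L. (f has_derivative L) (at z) \<and> (\<forall>c v. L (cscale c v) = c * L v))"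

lemma cscale_nth[simp]: "cscale c x $ m $ r = c * x $ m $ r"
  by (simp add: cscale_def)

lemma hol_const[simp]: "hol W (\<lambda>t. k)"
  unfolding hol_def by (auto intro!: exI[of _ "\<lambda>v. 0"] derivative_eq_intros)

lemma bl_coord: "bounded_linear (\<lambda>t::'n::finite frame. t $ m $ r)"
  using bounded_linear_compose[OF bounded_linear_vec_nth[of r] bounded_linear_vec_nth[of m]] by (simp add: o_def)

lemma hol_coord[simp]: "hol W (\<lambda>t. t $ m $ r)"
  unfolding hol_def
  by (auto intro!: exI[of _ "\<lambda>v. v $ m $ r"] bounded_linear.has_derivative[OF bl_coord] has_derivative_ident)

lemma hol_add[intro]: "hol W f \<Longrightarrow> hol W g \<Longrightarrow> hol W (\<lambda>t. f t + g t)"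
  unfolding hol_def
  apply clarsimp
  subgoal for z
    apply (drule bspec, assumption)+
    apply clarify
    subgoal for L1 L2 by (rule exI[of _ "\<lambda>v. L1 v + L2 v"]) (auto intro: has_derivative_add simp: distrib_left)
    done
  done

lemma hol_uminus[intro]: "hol W f \<Longrightarrow> hol W (\<lambda>t. - f t)"
  unfolding hol_def
  apply clarsimp
  subgoal for z
    apply (drule bspec, assumption)+
    apply clarify
    subgoal for L1 by (rule exI[of _ "\<lambda>v. - L1 v"]) (auto intro: has_derivative_minus)
    done
  done

lemma hol_diff[intro]: "hol W f \<Longrightarrow> hol W g \<Longrightarrow> hol W (\<lambda>t. f t - g t)"
  using hol_add[of W f "\<lambda>t. - g t"] hol_uminus[of W g] by simp

lemma hol_mult[intro]: "hol W f \<Longrightarrow> hol W g \<Longrightarrow> hol W (\<lambda>t. f t * g t)"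
  unfolding hol_def
  apply clarsimp
  subgoal for z
    apply (drule bspec, assumption)+
    apply clarify
    subgoal for L1 L2 by (rule exI[of _ "\<lambda>v. f z * L2 v + L1 v * g z"], rule conjI, rule has_derivative_mult, auto simp: algebra_simps)
    done
  done

lemma hol_inverse[intro]: "hol W f \<Longrightarrow> (\<And>t. t \<in> W \<Longrightarrow> f t \<noteq> 0) \<Longrightarrow> hol W (\<lambda>t. inverse (f t))"
  unfolding hol_def
proof clarsimp
  fix z assume H: "\<forall>z\<in>W. \<exists>L. (f has_derivative L) (at z) \<and> (\<forall>c v. L (cscale c v) = c * L v)"
    "\<And>t. t \<in> W \<Longrightarrow> f t \<noteq> 0" "z \<in> W"
  then obtain L where L: "(f has_derivative L) (at z)" "\<forall>c v. L (cscale c v) = c * L v" by blast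
  have "((\<lambda>t. inverse (f t)) has_derivative (\<lambda>h. - (inverse (f z) * L h * inverse (f z)))) (at z)"
    using has_derivative_inverse[where f=f and x=z and S=UNIV and f'=L] L H by simp
  then show "\<exists>L. ((\<lambda>t. inverse (f t)) has_derivative L) (at z) \<and> (\<forall>c v. L (cscale c v) = c * L v)"
    using L by (intro exI[of _ "\<lambda>h. - (inverse (f z) * L h * inverse (f z))"]) (auto simp: algebra_simps)
qed

lemma hol_divide[intro]: "hol W f \<Longrightarrow> hol W g \<Longrightarrow> (\<And>t. t \<in> W \<Longrightarrow> g t \<noteq> 0) \<Longrightarrow> hol W (\<lambda>t. f t / g t)"
  using hol_mult[of W f "\<lambda>t. inverse (g t)"] hol_inverse[of W g] by (simp add: divide_inverse)

lemma hol_cont: "hol W f \<Longrightarrow> continuous_on W f"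
  unfolding hol_def
  by (meson continuous_at_imp_continuous_on has_derivative_continuous)

lemma hol_subset: "hol W f \<Longrightarrow> V \<subseteq> W \<Longrightarrow> hol V f"
  unfolding hol_def by blast

lemma has_derivative_vec_components:
  fixes f :: "'a::real_normed_vector \<Rightarrow> 'b::real_normed_vector ^ 'm::finite"
  assumes "\<And>i. ((\<lambda>x. f x $ i) has_derivative (\<lambda>v. f' v $ i)) F"
  shows "(f has_derivative f') F"
proof -
  have bl: "\<And>i. bounded_linear (\<lambda>v. f' v $ i)" using assms has_derivative_bounded_linear by blast
  have lin: "linear f'"
  proof (unfold linear_iff, intro conjI allI)
    fix x y show "f' (x + y) = f' x + f' y"
      using linear_add[OF bounded_linear.linear[OF bl]] by (simp add: vec_eq_iff)
  next
    fix c x show "f' (c *\<^sub>R x) = c *\<^sub>R f' x"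
      using linear_scale[OF bounded_linear.linear[OF bl]] by (simp add: vec_eq_iff)
  qed
  have "bounded_linear f'"
  proof -
    have ex: "\<forall>i. \<exists>K. \<forall>v. norm (f' v $ i) \<le> norm v * K" using bl bounded_linear.bounded by blast
    obtain K where K: "\<And>i. \<forall>v. norm (f' v $ i) \<le> norm v * K i"
      using choice[OF ex] by blast
    have "norm (f' v) \<le> norm v * (\<Sum>i\<in>UNIV. K i)" for v
    proof -
      have "norm (f' v) \<le> (\<Sum>i\<in>UNIV. norm (f' v $ i))" by (simp add: norm_vec_def L2_set_le_sum)
      also have "\<dots> \<le> (\<Sum>i\<in>UNIV. norm v * K i)" by (rule sum_mono) (use K in blast)
      finally show ?thesis by (simp add: sum_distrib_left)
    qed
    then show ?thesis
      by (intro bounded_linear_intro[where K="\<Sum>i\<in>UNIV. K i"]) (auto simp: linear_add[OF lin] linear_scale[OF lin])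
  qed
  moreover have "((\<lambda>y. ((f y - f (Lim F (\<lambda>x. x))) - f' (y - Lim F (\<lambda>x. x))) /\<^sub>R norm (y - Lim F (\<lambda>x. x))) \<longlongrightarrow> 0) F"
  proof -
    have "\<And>i. ((\<lambda>y. ((f y $ i - f (Lim F (\<lambda>x. x)) $ i) - f' (y - Lim F (\<lambda>x. x)) $ i) /\<^sub>R norm (y - Lim F (\<lambda>x. x))) \<longlongrightarrow> 0) F"
      using assms unfolding has_derivative_def by blast
    then have "((\<lambda>y. \<chi> i. ((f y $ i - f (Lim F (\<lambda>x. x)) $ i) - f' (y - Lim F (\<lambda>x. x)) $ i) /\<^sub>R norm (y - Lim F (\<lambda>x. x))) \<longlongrightarrow> (\<chi> i. 0)) F"
      by (rule tendsto_vec_lambda)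
    moreover have "(\<chi> i. ((f y $ i - f (Lim F (\<lambda>x. x)) $ i) - f' (y - Lim F (\<lambda>x. x)) $ i) /\<^sub>R norm (y - Lim F (\<lambda>x. x)))
       = ((f y - f (Lim F (\<lambda>x. x))) - f' (y - Lim F (\<lambda>x. x))) /\<^sub>R norm (y - Lim F (\<lambda>x. x))" for y
      by (simp add: vec_eq_iff)
    moreover have "(\<chi> i. 0) = (0 :: 'b^'m)" by (simp add: vec_eq_iff)
    ultimately show ?thesis by simp
  qed
  ultimately show ?thesis unfolding has_derivative_def by blast
qed

lemma holomorphic_map_onI:
  assumes "\<And>m r. hol W (\<lambda>t. h t $ m $ r)"
  shows "holomorphic_map_on h W"
  unfolding holomorphic_map_on_def
proof
  fix z assume z: "z \<in> W"
  have "\<forall>m r. \<exists>L. ((\<lambda>t. h t $ m $ r) has_derivative L) (at z) \<and> (\<forall>c v. L (cscale c v) = c * L v)"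
    using assms z unfolding hol_def by blast
  then obtain LL where LL: "\<And>m r. ((\<lambda>t. h t $ m $ r) has_derivative LL m r) (at z) \<and> (\<forall>c v. LL m r (cscale c v) = c * LL m r v)"
    by metis
  define L where "L v = (\<chi> m. \<chi> r. LL m r v)" for v
  have "(h has_derivative L) (at z)"
  proof (rule has_derivative_vec_components)
    fix m show "((\<lambda>x. h x $ m) has_derivative (\<lambda>v. L v $ m)) (at z)"
      by (rule has_derivative_vec_components) (use LL in \<open>simp add: L_def\<close>)
  qed
  moreover have "L (cscale c v) = cscale c (L v)" for c v
    using LL by (simp add: L_def cscale_def vec_eq_iff)
  ultimately show "\<exists>L. (h has_derivative L) (at z) \<and> (\<forall>c v. L (cscale c v) = cscale c (L v))" by blast
qed

definition piD :: "(12 \<times> 'n) set \<Rightarrow> 'n::finite frame \<Rightarrow> 'n frame" where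
  "piD D t = (\<chi> m. \<chi> r. if (m, r) \<in> D then 0 else t $ m $ r)"

lemma piD_nth[simp]: "piD D t $ m $ r = (if (m, r) \<in> D then 0 else t $ m $ r)"
  by (simp add: piD_def)

lemma bl_piD: "bounded_linear (piD D)"
proof -
  have "linear (piD D)"
    by (auto simp: linear_iff vec_eq_iff)
  then show ?thesis by (simp add: linear_conv_bounded_linear)
qed

lemma hol_comp_piD: "hol W0 f \<Longrightarrow> hol {t. piD D t \<in> W0} (\<lambda>t. f (piD D t))"
  unfolding hol_def
proof clarsimp
  fix z assume "\<forall>z\<in>W0. \<exists>L. (f has_derivative L) (at z) \<and> (\<forall>c v. L (cscale c v) = c * L v)" "piD D z \<in> W0"
  then obtain L where L: "(f has_derivative L) (at (piD D z))" "\<forall>c v. L (cscale c v) = c * L v" by blast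
  have "((\<lambda>t. f (piD D t)) has_derivative (\<lambda>v. L (piD D v))) (at z)"
    using diff_chain_at[OF bounded_linear.has_derivative[OF bl_piD has_derivative_ident] L(1)]
    by (simp add: o_def)
  moreover have "piD D (cscale c v) = cscale c (piD D v)" for c v by (simp add: vec_eq_iff)
  ultimately show "\<exists>L. ((\<lambda>t. f (piD D t)) has_derivative L) (at z) \<and> (\<forall>c v. L (cscale c v) = c * L v)"
    using L(2) by (intro exI[of _ "\<lambda>v. L (piD D v)"]) auto
qed

lemma open_piD_vimage: assumes "open W0" shows "open {t. piD D t \<in> W0}"
proof -
  have "continuous_on UNIV (piD D)"
    using bl_piD linear_continuous_on by blast
  then have "\<And>x. isCont (piD D) x" using continuous_on_eq_continuous_at open_UNIV by blast
  then show ?thesis using continuous_open_vimage[of W0 "piD D"] \<open>open W0\<close> by (simp add: vimage_def)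
qed

lemma chart_lemma:
  fixes S :: "'n::finite frame set" and R0 :: "'n frame \<Rightarrow> 'n frame"
  assumes W0: "open W0" and hol: "\<And>m r. hol W0 (\<lambda>t. R0 t $ m $ r)"
    and agree: "\<And>t m r. t \<in> W0 \<Longrightarrow> (m, r) \<notin> D \<Longrightarrow> R0 t $ m $ r = t $ m $ r"
    and U: "open U" "y \<in> U" "\<And>z. z \<in> U \<Longrightarrow> piD D z \<in> W0"
    and SU: "\<And>z. z \<in> U \<Longrightarrow> z \<in> S \<longleftrightarrow> z = R0 (piD D z)"
    and y: "y \<in> S"
  shows "complex_submanifold_at S y"
proof -
  define T where "T = range (piD D)"
  define T' :: "'n frame set" where "T' = {z. \<forall>m r. (m, r) \<notin> D \<longrightarrow> z $ m $ r = 0}"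
  define W where "W = {t. piD D t \<in> W0}"
  define h where "h t = R0 (piD D t) - t" for t
  have T_iff: "t \<in> T \<longleftrightarrow> (\<forall>m r. (m, r) \<in> D \<longrightarrow> t $ m $ r = 0)" for t
    unfolding T_def
  proof
    assume "t \<in> range (piD D)" then show "\<forall>m r. (m, r) \<in> D \<longrightarrow> t $ m $ r = 0" by auto
  next
    assume "\<forall>m r. (m, r) \<in> D \<longrightarrow> t $ m $ r = 0"
    then have "piD D t = t" by (auto simp: vec_eq_iff)
    then show "t \<in> range (piD D)" by (metis rangeI)
  qed
  have piT: "t \<in> T \<Longrightarrow> piD D t = t" for t using T_iff by (auto simp: vec_eq_iff)
  have "csubspace T" unfolding csubspace_def using T_iff by (auto simp: vec_eq_iff)
  moreover have "csubspace T'" unfolding csubspace_def T'_def by auto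
  moreover have "T \<inter> T' = {0}"
  proof (intro equalityI subsetI)
    fix x assume "x \<in> T \<inter> T'" then show "x \<in> {0}" using T_iff[of x] unfolding T'_def by (auto simp: vec_eq_iff)
  next
    fix x :: "'n frame" assume "x \<in> {0}" then show "x \<in> T \<inter> T'" using T_iff[of x] unfolding T'_def by auto
  qed
  moreover have "open W" unfolding W_def by (rule open_piD_vimage[OF W0])
  moreover have "holomorphic_map_on h W"
    unfolding h_def W_def
    by (rule holomorphic_map_onI) (auto intro!: hol_diff hol_comp_piD hol)
  moreover have "\<forall>t\<in>T \<inter> W. h t \<in> T'"
    using agree piT unfolding T'_def W_def h_def by auto
  moreover have "S \<inter> U = {t + h t | t. t \<in> T \<inter> W} \<inter> U"
  proof (intro equalityI subsetI)
    fix z assume z: "z \<in> S \<inter> U"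
    then have "z = piD D z + h (piD D z)" "piD D z \<in> T \<inter> W"
      using SU[of z] U(3)[of z] piT[of "piD D z"] unfolding h_def W_def T_def by auto
    then show "z \<in> {t + h t | t. t \<in> T \<inter> W} \<inter> U" using z by blast
  next
    fix z assume "z \<in> {t + h t | t. t \<in> T \<inter> W} \<inter> U"
    then obtain t where t: "t \<in> T" "t \<in> W" "z = t + h t" "z \<in> U" by blast
    then have zR: "z = R0 t" unfolding h_def using piT by simp
    have "piD D z = t"
      using t zR agree[of t] piT[of t] T_iff[of t] unfolding W_def by (auto simp: vec_eq_iff)
    then show "z \<in> S \<inter> U" using SU[of z] t zR by auto
  qed
  ultimately show ?thesis unfolding complex_submanifold_at_def
    using y U by blast
qed

definition ind2 :: "complex^'n::finite \<Rightarrow> complex^'n \<Rightarrow> bool" where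
  "ind2 a b \<longleftrightarrow> (\<forall>\<alpha> \<beta>. \<alpha> *s a + \<beta> *s b = 0 \<longrightarrow> \<alpha> = 0 \<and> \<beta> = 0)"

definition ind3 :: "complex^'n::finite \<Rightarrow> complex^'n \<Rightarrow> complex^'n \<Rightarrow> bool" where
  "ind3 a b c \<longleftrightarrow> (\<forall>\<alpha> \<beta> \<gamma>. \<alpha> *s a + \<beta> *s b + \<gamma> *s c = 0 \<longrightarrow> \<alpha> = 0 \<and> \<beta> = 0 \<and> \<gamma> = 0)"

abbreviation sp2 :: "complex^'n::finite \<Rightarrow> complex^'n \<Rightarrow> (complex^'n) set" where
  "sp2 a b \<equiv> vec.span {a, b}"

abbreviation sp3 :: "complex^'n::finite \<Rightarrow> complex^'n \<Rightarrow> complex^'n \<Rightarrow> (complex^'n) set" where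
  "sp3 a b c \<equiv> vec.span {a, b, c}"

lemma sp1_iff: "x \<in> vec.span {a} \<longleftrightarrow> (\<exists>\<alpha>. x = \<alpha> *s a)"
  by (auto simp: vec.span_singleton)

lemma sp2_iff: "x \<in> sp2 a b \<longleftrightarrow> (\<exists>\<alpha> \<beta>. x = \<alpha> *s a + \<beta> *s b)"
proof
  assume "x \<in> sp2 a b"
  then obtain k where "x - k *s a \<in> vec.span {b}" unfolding vec.span_insert[of a "{b}"] by blast
  then obtain m where "x - k *s a = m *s b" by (auto simp: vec.span_singleton)
  then have "x = k *s a + m *s b" by (simp add: algebra_simps)
  then show "\<exists>\<alpha> \<beta>. x = \<alpha> *s a + \<beta> *s b" by blast
next
  assume "\<exists>\<alpha> \<beta>. x = \<alpha> *s a + \<beta> *s b"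
  then obtain \<alpha> \<beta> where "x = \<alpha> *s a + \<beta> *s b" by blast
  then have "x - \<alpha> *s a \<in> vec.span {b}" by (auto simp: vec.span_singleton)
  then show "x \<in> sp2 a b" unfolding vec.span_insert[of a "{b}"] by blast
qed

lemma sp3_iff: "x \<in> sp3 a b c \<longleftrightarrow> (\<exists>\<alpha> \<beta> \<gamma>. x = \<alpha> *s a + \<beta> *s b + \<gamma> *s c)"
proof
  assume "x \<in> sp3 a b c"
  then obtain k where "x - k *s a \<in> sp2 b c" unfolding vec.span_insert[of a "{b, c}"] by blast
  then obtain m n where "x - k *s a = m *s b + n *s c" by (auto simp: sp2_iff)
  then have "x = k *s a + m *s b + n *s c" by (simp add: algebra_simps)
  then show "\<exists>\<alpha> \<beta> \<gamma>. x = \<alpha> *s a + \<beta> *s b + \<gamma> *s c" by blast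
next
  assume "\<exists>\<alpha> \<beta> \<gamma>. x = \<alpha> *s a + \<beta> *s b + \<gamma> *s c"
  then obtain \<alpha> \<beta> \<gamma> where "x = \<alpha> *s a + \<beta> *s b + \<gamma> *s c" by blast
  then have "x - \<alpha> *s a \<in> sp2 b c" by (auto simp: sp2_iff algebra_simps)
  then show "x \<in> sp3 a b c" unfolding vec.span_insert[of a "{b, c}"] by blast
qed

lemma ind2_iff: "ind2 a b \<longleftrightarrow> vec.independent {a, b} \<and> a \<noteq> b"
proof
  assume H: "ind2 a b"
  have ab: "a \<noteq> b"
  proof
    assume "a = b" then have "1 *s a + (-1) *s b = 0" by (simp add: vec_eq_iff)
    then show False using H[unfolded ind2_def, rule_format, of 1 "-1"] by simp
  qed
  have "vec.independent {a, b}"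
    unfolding vec.independent_explicit
  proof (intro conjI allI impI ballI)
    fix c v
    assume "(\<Sum>v\<in>{a, b}. c v *s v) = 0" "v \<in> {a, b}"
    then show "c v = 0" using H ab unfolding ind2_def by auto
  qed simp
  then show "vec.independent {a, b} \<and> a \<noteq> b" using ab by blast
next
  assume H: "vec.independent {a, b} \<and> a \<noteq> b"
  show "ind2 a b" unfolding ind2_def
  proof (intro allI impI)
    fix \<alpha> \<beta> assume E: "\<alpha> *s a + \<beta> *s b = 0"
    define c where "c v = (if v = a then \<alpha> else \<beta>)" for v
    have ba: "b \<noteq> a" using H by auto
    have "(\<Sum>v\<in>{a, b}. c v *s v) = \<alpha> *s a + \<beta> *s b" using ba by (simp add: c_def)
    then have "(\<Sum>v\<in>{a, b}. c v *s v) = 0" using E by simp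
    then have "c a = 0" "c b = 0" using H unfolding vec.independent_explicit by blast+
    then show "\<alpha> = 0 \<and> \<beta> = 0" using H by (simp add: c_def split: if_splits)
  qed
qed

lemma ind3_iff: "ind3 a b c \<longleftrightarrow> vec.independent {a, b, c} \<and> card {a, b, c} = 3"
proof
  assume H: "ind3 a b c"
  have d: "a \<noteq> b" "a \<noteq> c" "b \<noteq> c"
  proof -
    show "a \<noteq> b"
    proof
      assume "a = b" then have "1 *s a + (-1) *s b + 0 *s c = 0" by (simp add: vec_eq_iff)
      then show False using H[unfolded ind3_def, rule_format, of 1 "-1" 0] by simp
    qed
    show "a \<noteq> c"
    proof
      assume "a = c" then have "1 *s a + 0 *s b + (-1) *s c = 0" by (simp add: vec_eq_iff)
      then show False using H[unfolded ind3_def, rule_format, of 1 0 "-1"] by simp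
    qed
    show "b \<noteq> c"
    proof
      assume "b = c" then have "0 *s a + 1 *s b + (-1) *s c = 0" by (simp add: vec_eq_iff)
      then show False using H[unfolded ind3_def, rule_format, of 0 1 "-1"] by simp
    qed
  qed
  have "vec.independent {a, b, c}"
    unfolding vec.independent_explicit
  proof (intro conjI allI impI ballI)
    fix f v
    assume "(\<Sum>v\<in>{a, b, c}. f v *s v) = 0" "v \<in> {a, b, c}"
    then show "f v = 0" using H d unfolding ind3_def by (auto simp: add.assoc)
  qed simp
  then show "vec.independent {a, b, c} \<and> card {a, b, c} = 3" using d by auto
next
  assume H: "vec.independent {a, b, c} \<and> card {a, b, c} = 3"
  then have d: "a \<noteq> b" "a \<noteq> c" "b \<noteq> c"
    by (auto simp: card_insert_if split: if_splits)
  show "ind3 a b c" unfolding ind3_def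
  proof (intro allI impI)
    fix \<alpha> \<beta> \<gamma> assume E: "\<alpha> *s a + \<beta> *s b + \<gamma> *s c = 0"
    define f where "f v = (if v = a then \<alpha> else if v = b then \<beta> else \<gamma>)" for v
    have "(\<Sum>v\<in>{a, b, c}. f v *s v) = 0" using E d by (simp add: f_def add.assoc)
    then have "f a = 0" "f b = 0" "f c = 0" using H unfolding vec.independent_explicit by blast+
    then show "\<alpha> = 0 \<and> \<beta> = 0 \<and> \<gamma> = 0" using d by (simp add: f_def split: if_splits)
  qed
qed

lemma Grass1_span: assumes v: "v \<noteq> 0" shows "vec.span {v} \<in> Grass 1"
proof -
  have "vec.independent {v}" using vec.independent_insertI[of v "{}"] v by simp
  then show ?thesis using vec.dim_span_eq_card_independent[of "{v}"] unfolding Grass_def by simp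
qed

lemma Grass2_span: "ind2 a b \<Longrightarrow> sp2 a b \<in> Grass 2"
  unfolding Grass_def ind2_iff
  using vec.dim_span_eq_card_independent[of "{a,b}"]
  by simp

lemma Grass3_span: "ind3 a b c \<Longrightarrow> sp3 a b c \<in> Grass 3"
  unfolding Grass_def ind3_iff
  using vec.dim_span_eq_card_independent[of "{a,b,c}"]
  by simp

lemma Grass_basis:
  assumes "V \<in> Grass k"
  obtains B where "vec.independent B" "card B = k" "V = vec.span B"
proof -
  have sub: "vec.subspace V" and d: "vec.dim V = k" using assms by (auto simp: Grass_def)
  obtain B where "B \<subseteq> V" "vec.independent B" "V \<subseteq> vec.span B" "card B = vec.dim V"
    using vec.basis_exists by blast
  moreover then have "vec.span B = V" using vec.span_subspace sub by blast
  ultimately show ?thesis using that d by auto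
qed

lemma Grass1_E:
  assumes "p \<in> Grass 1" obtains v where "v \<noteq> 0" "p = vec.span {v}"
proof -
  obtain B where B: "vec.independent B" "card B = 1" "p = vec.span B" using Grass_basis[OF assms] by blast
  then obtain v where "B = {v}" by (meson card_1_singletonE)
  then show ?thesis using that B vec.dependent_zero by auto
qed

lemma Grass2_E:
  assumes "l \<in> Grass 2" obtains a b where "ind2 a b" "l = sp2 a b"
proof -
  obtain B where B: "vec.independent B" "card B = 2" "l = vec.span B" using Grass_basis[OF assms] by blast
  then obtain a b where "B = {a, b}" "a \<noteq> b" by (meson card_2_iff)
  then show ?thesis using that B by (auto simp: ind2_iff)
qed

lemma Grass3_E:
  assumes "P \<in> Grass 3" obtains a b c where "ind3 a b c" "P = sp3 a b c"
proof -
  obtain B where B: "vec.independent B" "card B = 3" "P = vec.span B" using Grass_basis[OF assms] by blast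
  then obtain a b c where "B = {a, b, c}" by (metis card_3_iff)
  then show ?thesis using that B by (auto simp: ind3_iff)
qed

lemma span1_sub: "vec.span {v} \<subseteq> X \<longleftrightarrow> v \<in> X" if "vec.subspace X"
  using that vec.span_minimal vec.span_base by blast

lemma span2_sub: "sp2 a b \<subseteq> X \<longleftrightarrow> a \<in> X \<and> b \<in> X" if "vec.subspace X"
  using that vec.span_minimal vec.span_base by (metis insert_subset insertCI empty_subsetI subset_trans vec.span_superset)

definition crp :: "'n::finite \<Rightarrow> 'n \<Rightarrow> 'n \<Rightarrow> complex^'n \<Rightarrow> complex^'n \<Rightarrow> complex" where
  "crp p q s y z = y$q * z$s - y$s * z$q"

definition dt :: "'n::finite \<Rightarrow> 'n \<Rightarrow> 'n \<Rightarrow> complex^'n \<Rightarrow> complex^'n \<Rightarrow> complex^'n \<Rightarrow> complex" where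
  "dt p q s x y z = x$p * crp p q s y z + x$q * crp q s p y z + x$s * crp s p q y z"

definition crv :: "'n::finite \<Rightarrow> 'n \<Rightarrow> 'n \<Rightarrow> complex^'n \<Rightarrow> complex^'n \<Rightarrow> complex^'n" where
  "crv p q s y z = (\<chi> r. if r = p then crp p q s y z else if r = q then crp q s p y z
                      else if r = s then crp s p q y z else 0)"

lemma dt_rot: "dt p q s x y z = dt q s p x y z"
  unfolding dt_def crp_def by (simp add: algebra_simps)

lemma dt_cyc: "dt p q s x y z = dt p q s y z x"
  unfolding dt_def crp_def by (simp add: algebra_simps)

lemma dt_swap: "dt p q s x y z = - dt p q s y x z"
  unfolding dt_def crp_def by (simp add: algebra_simps)

lemma dt_lin1: "dt p q s (\<alpha> *s a + \<beta> *s b) y z = \<alpha> * dt p q s a y z + \<beta> * dt p q s b y z"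
  unfolding dt_def crp_def by (simp add: algebra_simps)

lemma dt_lin3: "dt p q s (\<alpha> *s a + \<beta> *s b + \<gamma> *s c) y z = \<alpha> * dt p q s a y z + \<beta> * dt p q s b y z + \<gamma> * dt p q s c y z"
  unfolding dt_def crp_def by (simp add: algebra_simps)

lemma dt_same12: "dt p q s x x z = 0"
  unfolding dt_def crp_def by (simp add: algebra_simps)

lemma dt_same23: "dt p q s x y y = 0"
  unfolding dt_def crp_def by (simp add: algebra_simps)

lemma dt_same13: "dt p q s x y x = 0"
  unfolding dt_def crp_def by (simp add: algebra_simps)

lemma dt_cong:
  assumes "x$p = x'$p" "x$q = x'$q" "x$s = x'$s" "y$p = y'$p" "y$q = y'$q" "y$s = y'$s"
    "z$p = z'$p" "z$q = z'$q" "z$s = z'$s"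
  shows "dt p q s x y z = dt p q s x' y' z'"
  using assms unfolding dt_def crp_def by simp

lemma dt_in_sp2: "x \<in> sp2 a b \<Longrightarrow> dt p q s x a b = 0"
  by (auto simp: sp2_iff dt_lin1 dt_same12 dt_same13 dt_cyc[of p q s a] )

lemma K1:
  assumes "dt p q s x y z = 0" "crp p q s y z \<noteq> 0"
  defines "\<alpha> \<equiv> (x$q*z$s - x$s*z$q) / crp p q s y z"
    and "\<beta> \<equiv> (y$q*x$s - y$s*x$q) / crp p q s y z"
  shows "x$p = \<alpha>*y$p + \<beta>*z$p" "x$q = \<alpha>*y$q + \<beta>*z$q" "x$s = \<alpha>*y$s + \<beta>*z$s"
proof -
  define c where "c = crp p q s y z"
  have c: "c \<noteq> 0" using assms(2) by (simp add: c_def)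
  have A: "\<alpha> * c = x$q*z$s - x$s*z$q" using c by (simp add: \<alpha>_def c_def)
  have B: "\<beta> * c = y$q*x$s - y$s*x$q" using c by (simp add: \<beta>_def c_def)
  have cc: "c = y$q * z$s - y$s * z$q" by (simp add: c_def crp_def)
  have "(\<alpha>*y$q + \<beta>*z$q) * c = (\<alpha>*c)*y$q + (\<beta>*c)*z$q" by (simp add: algebra_simps)
  also have "\<dots> = x$q * c" unfolding A B by (simp add: cc algebra_simps)
  finally show "x$q = \<alpha>*y$q + \<beta>*z$q" using c by simp
  have "(\<alpha>*y$s + \<beta>*z$s) * c = (\<alpha>*c)*y$s + (\<beta>*c)*z$s" by (simp add: algebra_simps)
  also have "\<dots> = x$s * c" unfolding A B by (simp add: cc algebra_simps)
  finally show "x$s = \<alpha>*y$s + \<beta>*z$s" using c by simp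
  have "(\<alpha>*y$p + \<beta>*z$p) * c = (\<alpha>*c)*y$p + (\<beta>*c)*z$p" by (simp add: algebra_simps)
  also have "\<dots> = x$p * c - dt p q s x y z" unfolding A B by (simp add: cc dt_def crp_def algebra_simps)
  finally show "x$p = \<alpha>*y$p + \<beta>*z$p" using c assms(1) by simp
qed

lemma dt_nonzero_ind3: "dt p q s x y z \<noteq> 0 \<Longrightarrow> ind3 x y z"
  unfolding ind3_def
proof (intro allI impI)
  fix \<alpha> \<beta> \<gamma> assume d: "dt p q s x y z \<noteq> 0" and E: "\<alpha> *s x + \<beta> *s y + \<gamma> *s z = 0"
  define w where "w = \<alpha> *s x + \<beta> *s y + \<gamma> *s z"
  have z0: "dt p q s 0 y z = 0" "dt p q s 0 x z = 0" "dt p q s 0 x y = 0" by (simp_all add: dt_def crp_def)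
  have "dt p q s w y z = \<alpha> * dt p q s x y z"
    unfolding w_def by (simp add: dt_lin3 dt_same12 dt_same13)
  moreover have "dt p q s w x z = \<beta> * dt p q s y x z"
    unfolding w_def by (simp add: dt_lin3 dt_same12 dt_same13)
  moreover have "dt p q s w x y = \<gamma> * dt p q s z x y"
    unfolding w_def by (simp add: dt_lin3 dt_same12 dt_same13)
  moreover have "dt p q s y x z = - dt p q s x y z" by (rule dt_swap)
  moreover have "dt p q s z x y = dt p q s x y z" using dt_cyc[of p q s x y z] dt_cyc[of p q s y z x] by simp
  ultimately show "\<alpha> = 0 \<and> \<beta> = 0 \<and> \<gamma> = 0" using d E z0 unfolding w_def[symmetric] by auto
qed

lemma minor2_ind2: "a$q*b$s - a$s*b$q \<noteq> 0 \<Longrightarrow> ind2 a b"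
  unfolding ind2_def
proof (intro allI impI)
  fix \<alpha> \<beta> assume d: "a$q*b$s - a$s*b$q \<noteq> 0" and E: "\<alpha> *s a + \<beta> *s b = 0"
  have e1: "\<alpha> * a$q + \<beta> * b$q = 0" "\<alpha> * a$s + \<beta> * b$s = 0" using E by (auto simp: vec_eq_iff dest: spec)
  have "\<alpha> * (a$q*b$s - a$s*b$q) = b$s * (\<alpha> * a$q + \<beta> * b$q) - b$q * (\<alpha> * a$s + \<beta> * b$s)"
    by (simp add: algebra_simps)
  moreover have "\<beta> * (a$q*b$s - a$s*b$q) = a$q * (\<alpha> * a$s + \<beta> * b$s) - a$s * (\<alpha> * a$q + \<beta> * b$q)"
    by (simp add: algebra_simps)
  ultimately show "\<alpha> = 0 \<and> \<beta> = 0" using d e1 by simp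
qed

lemma ind2_minor:
  assumes "ind2 a b" obtains q s where "a$q*b$s - a$s*b$q \<noteq> 0"
proof (rule ccontr)
  assume "\<not> thesis"
  then have Z: "\<And>q s. a$q*b$s - a$s*b$q = 0" using that by blast
  show False
  proof (cases "a = 0")
    case True
    then have "1 *s a + 0 *s b = 0" by simp
    then show False using assms[unfolded ind2_def, rule_format, of 1 0] by simp
  next
    case False
    then obtain q where q: "a$q \<noteq> 0" by (auto simp: vec_eq_iff)
    have "(b$q) *s a + (- a$q) *s b = 0"
      using Z[of q] q by (auto simp: vec_eq_iff algebra_simps)
    then show False using assms[unfolded ind2_def, rule_format, of "b$q" "- a$q"] q by simp
  qed
qed

lemma ind3_minor:
  assumes "ind3 x y z" obtains p q s where "dt p q s x y z \<noteq> 0"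
proof (rule ccontr)
  assume "\<not> thesis"
  then have Z: "\<And>p q s. dt p q s x y z = 0" using that by blast
  show False
  proof (cases "x = 0")
    case True
    then have "1 *s x + 0 *s y + 0 *s z = 0" by simp
    then show False using assms[unfolded ind3_def, rule_format, of 1 0 0] by simp
  next
    case False
    then obtain p where p: "x$p \<noteq> 0" by (auto simp: vec_eq_iff)
    define y' where "y' = x$p *s y - y$p *s x"
    define z' where "z' = x$p *s z - z$p *s x"
    show False
    proof (cases "y' = 0")
      case True
      then have "(- y$p) *s x + (x$p) *s y + 0 *s z = 0" unfolding y'_def by (simp add: algebra_simps)
      then show False using assms[unfolded ind3_def, rule_format, of "- y$p" "x$p" 0] p by simp
    next
      case False
      then obtain q where q: "y'$q \<noteq> 0" by (auto simp: vec_eq_iff)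
      have "y'$q *s z' - z'$q *s y' = 0"
      proof -
        have "(y'$q *s z' - z'$q *s y') $ r = x$p * dt p q r x y z" for r
          unfolding y'_def z'_def dt_def crp_def by (simp add: algebra_simps)
        then show ?thesis using Z by (simp add: vec_eq_iff)
      qed
      then have "(- y'$q * z$p + z'$q * y$p) *s x + (- z'$q * x$p) *s y + (y'$q * x$p) *s z = 0"
        unfolding y'_def z'_def by (simp add: algebra_simps vec_eq_iff)
      then show False using assms[unfolded ind3_def, rule_format, of "- y'$q * z$p + z'$q * y$p" "- z'$q * x$p" "y'$q * x$p"] p q
        by simp
    qed
  qed
qed

lemma dt_lin3_2: "dt p q s y (\<alpha> *s a + \<beta> *s b + \<gamma> *s c) z = \<alpha> * dt p q s y a z + \<beta> * dt p q s y b z + \<gamma> * dt p q s y c z"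
  unfolding dt_def crp_def by (simp add: algebra_simps)

lemma dt_lin3_3: "dt p q s y z (\<alpha> *s a + \<beta> *s b + \<gamma> *s c) = \<alpha> * dt p q s y z a + \<beta> * dt p q s y z b + \<gamma> * dt p q s y z c"
  unfolding dt_def crp_def by (simp add: algebra_simps)

lemma dt_lin2_1: "dt p q s (\<alpha> *s a + \<beta> *s b) y z = \<alpha> * dt p q s a y z + \<beta> * dt p q s b y z"
  unfolding dt_def crp_def by (simp add: algebra_simps)
lemma dt_lin2_2: "dt p q s y (\<alpha> *s a + \<beta> *s b) z = \<alpha> * dt p q s y a z + \<beta> * dt p q s y b z"
  unfolding dt_def crp_def by (simp add: algebra_simps)
lemma dt_lin2_3: "dt p q s y z (\<alpha> *s a + \<beta> *s b) = \<alpha> * dt p q s y z a + \<beta> * dt p q s y z b"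
  unfolding dt_def crp_def by (simp add: algebra_simps)

definition ext :: "'n::finite \<Rightarrow> 'n \<Rightarrow> 'n \<Rightarrow> complex^'n \<Rightarrow> complex^'n \<Rightarrow> complex^'n \<Rightarrow> complex^'n \<Rightarrow> complex^'n" where
  "ext p q s c1 c2 c3 x = (dt p q s x c2 c3 / dt p q s c1 c2 c3) *s c1 + (dt p q s c1 x c3 / dt p q s c1 c2 c3) *s c2
     + (dt p q s c1 c2 x / dt p q s c1 c2 c3) *s c3"

definition agr :: "'n::finite \<Rightarrow> 'n \<Rightarrow> 'n \<Rightarrow> complex^'n \<Rightarrow> complex^'n \<Rightarrow> bool" where
  "agr p q s x y \<longleftrightarrow> x$p = y$p \<and> x$q = y$q \<and> x$s = y$s"

lemma ext_in_sp3: "ext p q s c1 c2 c3 x \<in> sp3 c1 c2 c3"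
  unfolding ext_def sp3_iff by blast

lemma ext_id:
  assumes C: "dt p q s c1 c2 c3 \<noteq> 0" and x: "x \<in> sp3 c1 c2 c3"
  shows "ext p q s c1 c2 c3 x = x"
proof -
  obtain \<alpha> \<beta> \<gamma> where x: "x = \<alpha> *s c1 + \<beta> *s c2 + \<gamma> *s c3" using x by (auto simp: sp3_iff)
  let ?C = "dt p q s c1 c2 c3"
  have "dt p q s x c2 c3 = \<alpha> * ?C" unfolding x dt_lin3 by (simp add: dt_same12 dt_same13)
  moreover have "dt p q s c1 x c3 = \<beta> * ?C" unfolding x dt_lin3_2 by (simp add: dt_same12 dt_same23)
  moreover have "dt p q s c1 c2 x = \<gamma> * ?C" unfolding x dt_lin3_3 by (simp add: dt_same13 dt_same23)
  ultimately show ?thesis using C unfolding ext_def by (simp add: x)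
qed

lemma ext_cong: "agr p q s x y \<Longrightarrow> ext p q s c1 c2 c3 x = ext p q s c1 c2 c3 y"
  unfolding ext_def agr_def by (simp add: dt_cong[of x p y q s c2 c2 c3 c3] dt_cong[of c1 p c1 q s x y c3 c3] dt_cong[of c1 p c1 q s c2 c2 x y])

lemma ext_lin: "ext p q s c1 c2 c3 (\<alpha> *s a + \<beta> *s b) = \<alpha> *s ext p q s c1 c2 c3 a + \<beta> *s ext p q s c1 c2 c3 b"
  unfolding ext_def dt_lin2_1 dt_lin2_2 dt_lin2_3
  by (simp add: vec_eq_iff add_divide_distrib ring_distribs mult.assoc mult.left_commute)

lemma ext_row:
  assumes C: "dt p q s c1 c2 c3 \<noteq> 0" and r: "r = p \<or> r = q \<or> r = s" and d: "p \<noteq> q" "p \<noteq> s" "q \<noteq> s"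
  shows "ext p q s c1 c2 c3 x $ r = x $ r"
proof -
  let ?C = "dt p q s c1 c2 c3"
  have "dt p q s x c2 c3 * c1$r + dt p q s c1 x c3 * c2$r + dt p q s c1 c2 x * c3$r = ?C * x$r"
    using r d unfolding dt_def crp_def by (auto simp: algebra_simps)
  then show ?thesis using C unfolding ext_def by (simp add: field_simps)
qed

lemma rows_determine:
  assumes "dt p q s c1 c2 c3 \<noteq> 0" "x \<in> sp3 c1 c2 c3" "y \<in> sp3 c1 c2 c3" "agr p q s x y"
  shows "x = y"
  using ext_id[OF assms(1,2)] ext_id[OF assms(1,3)] ext_cong[OF assms(4)] by metis

lemma sp3_lin: "a \<in> sp3 c1 c2 c3 \<Longrightarrow> b \<in> sp3 c1 c2 c3 \<Longrightarrow> \<alpha> *s a + \<beta> *s b \<in> sp3 c1 c2 c3"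
  by (simp add: vec.span_add vec.span_scale)

lemma sp2_sub_sp3: "a \<in> sp3 c1 c2 c3 \<Longrightarrow> b \<in> sp3 c1 c2 c3 \<Longrightarrow> x \<in> sp2 a b \<Longrightarrow> x \<in> sp3 c1 c2 c3"
  by (auto simp: sp2_iff sp3_lin)

lemma Dm:
  assumes "a \<in> sp2 x y" "b \<in> sp2 x y" "ind2 a b"
  shows "x \<in> sp2 a b \<and> y \<in> sp2 a b"
proof -
  obtain p q where a: "a = p *s x + q *s y" using assms(1) by (auto simp: sp2_iff)
  obtain r t where b: "b = r *s x + t *s y" using assms(2) by (auto simp: sp2_iff)
  define \<delta> where "\<delta> = p*t - q*r"
  have i: "\<And>\<alpha> \<beta>. \<alpha> *s a + \<beta> *s b = 0 \<Longrightarrow> \<alpha> = 0 \<and> \<beta> = 0" using assms(3) unfolding ind2_def by blast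
  have "\<delta> \<noteq> 0"
  proof
    assume d0: "\<delta> = 0"
    have "t = 0 \<and> - q = 0"
      by (rule i) (use d0 in \<open>simp add: a b \<delta>_def vec_eq_iff algebra_simps\<close>)
    then have tq: "t = 0" "q = 0" by auto
    have "r = 0 \<and> - p = 0"
      by (rule i) (use d0 in \<open>simp add: a b \<delta>_def vec_eq_iff algebra_simps\<close>)
    then have rp: "r = 0" "p = 0" by auto
    have "1 *s a + 0 *s b = 0" using tq rp a by simp
    then show False using i by fastforce
  qed
  have "x = (t/\<delta>) *s a + (- q/\<delta>) *s b"
  proof -
    have "t * a$i - q * b$i = \<delta> * x$i" for i unfolding a b \<delta>_def by (simp add: algebra_simps)
    moreover have "(t/\<delta>) * a$i + (- q/\<delta>) * b$i = (t * a$i - q * b$i) / \<delta>" for i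
      using \<open>\<delta> \<noteq> 0\<close> by (simp add: field_simps)
    ultimately have "(t/\<delta>) * a$i + (- q/\<delta>) * b$i = x$i" for i using \<open>\<delta> \<noteq> 0\<close> by simp
    then show ?thesis by (simp add: vec_eq_iff)
  qed
  moreover have "y = (- r/\<delta>) *s a + (p/\<delta>) *s b"
  proof -
    have "p * b$i - r * a$i = \<delta> * y$i" for i unfolding a b \<delta>_def by (simp add: algebra_simps)
    moreover have "(- r/\<delta>) * a$i + (p/\<delta>) * b$i = (p * b$i - r * a$i) / \<delta>" for i
      using \<open>\<delta> \<noteq> 0\<close> by (simp add: field_simps)
    ultimately have "(- r/\<delta>) * a$i + (p/\<delta>) * b$i = y$i" for i using \<open>\<delta> \<noteq> 0\<close> by simp
    then show ?thesis by (simp add: vec_eq_iff)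
  qed
  ultimately show ?thesis unfolding sp2_iff by blast
qed

lemma K4:
  assumes C: "dt p q s c1 c2 c3 \<noteq> 0" and d: "p \<noteq> q" "p \<noteq> s" "q \<noteq> s"
    and ab: "a \<in> sp3 c1 c2 c3" "b \<in> sp3 c1 c2 c3" and i: "ind2 a b"
  shows "crp p q s a b \<noteq> 0 \<or> crp q s p a b \<noteq> 0 \<or> crp s p q a b \<noteq> 0"
proof (rule ccontr)
  assume "\<not> ?thesis"
  then have z: "a$q * b$s = a$s * b$q" "a$s * b$p = a$p * b$s" "a$p * b$q = a$q * b$p" by (auto simp: crp_def)
  have ii: "\<And>\<alpha> \<beta>. \<alpha> *s a + \<beta> *s b = 0 \<Longrightarrow> \<alpha> = 0 \<and> \<beta> = 0" using i unfolding ind2_def by blast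
  show False
  proof (cases "a$p = 0 \<and> a$q = 0 \<and> a$s = 0")
    case True
    then have "a = 0" using rows_determine[OF C ab(1), of 0] by (simp add: agr_def vec.span_zero)
    then show False using ii[of 1 0] by simp
  next
    case False
    then obtain r0 where r0: "r0 = p \<or> r0 = q \<or> r0 = s" "a$r0 \<noteq> 0" by blast
    define lam where "lam = b$r0 / a$r0"
    have "agr p q s b (lam *s a + 0 *s b)"
      using r0 z unfolding agr_def lam_def by (auto simp: field_simps)
    then have "b = lam *s a + 0 *s b" using rows_determine[OF C ab(2) sp3_lin[OF ab]] by blast
    then have "lam *s a + (-1) *s b = 0" by (simp add: vec_eq_iff)
    then show False using ii[of lam "-1"] by simp
  qed
qed

lemma K6:
  assumes C: "dt p q s c1 c2 c3 \<noteq> 0" and d: "p \<noteq> q" "p \<noteq> s" "q \<noteq> s"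
    and x: "x \<in> sp3 c1 c2 c3" and ab: "a \<in> sp3 c1 c2 c3" "b \<in> sp3 c1 c2 c3" and i: "ind2 a b"
    and z: "dt p q s x a b = 0"
  shows "x \<in> sp2 a b"
proof -
  have z2: "dt q s p x a b = 0" "dt s p q x a b = 0" using z dt_rot[of p q s x a b] dt_rot[of q s p x a b] by simp_all
  have "\<exists>\<alpha> \<beta>. agr p q s x (\<alpha> *s a + \<beta> *s b)"
    using K4[OF C d ab i]
  proof (elim disjE)
    assume "crp p q s a b \<noteq> 0" then show ?thesis using K1[OF z] unfolding agr_def vector_add_component vector_smult_component by blast
  next
    assume "crp q s p a b \<noteq> 0" then show ?thesis using K1[OF z2(1)] unfolding agr_def vector_add_component vector_smult_component by blast
  next
    assume "crp s p q a b \<noteq> 0" then show ?thesis using K1[OF z2(2)] unfolding agr_def vector_add_component vector_smult_component by blast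
  qed
  then obtain \<alpha> \<beta> where "agr p q s x (\<alpha> *s a + \<beta> *s b)" by blast
  then have "x = \<alpha> *s a + \<beta> *s b" using rows_determine[OF C x sp3_lin[OF ab]] by blast
  then show ?thesis by (auto simp: sp2_iff)
qed

definition slv :: "'n::finite \<Rightarrow> 'n \<Rightarrow> 'n \<Rightarrow> complex^'n \<Rightarrow> complex^'n \<Rightarrow> complex^'n \<Rightarrow> complex^'n" where
  "slv p q s x y z = (\<chi> r. if r = p then - (x$q * crp q s p y z + x$s * crp s p q y z) / crp p q s y z else x$r)"

lemma slv_other: "r \<noteq> p \<Longrightarrow> slv p q s x y z $ r = x $ r"
  by (simp add: slv_def)

lemma slv_dt:
  assumes "crp p q s y z \<noteq> 0" "p \<noteq> q" "p \<noteq> s"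
  shows "dt p q s (slv p q s x y z) y z = 0"
  using assms unfolding dt_def slv_def by (simp add: field_simps)

lemma slv_eq:
  assumes "dt p q s x y z = 0" "crp p q s y z \<noteq> 0"
  shows "slv p q s x y z = x"
proof -
  have "x$p * crp p q s y z = - (x$q * crp q s p y z + x$s * crp s p q y z)"
  proof -
    have "x$p * crp p q s y z + (x$q * crp q s p y z + x$s * crp s p q y z) = 0"
      using assms(1) unfolding dt_def by (simp add: add.assoc)
    then show ?thesis by (simp only: eq_neg_iff_add_eq_0)
  qed
  then have "x$p = - (x$q * crp q s p y z + x$s * crp s p q y z) / crp p q s y z"
    using assms(2) by (simp add: eq_divide_eq)
  then show ?thesis by (simp add: slv_def vec_eq_iff)
qed

lemma slv_cong:
  assumes "agr p q s y y'" "agr p q s z z'" "x$q = x'$q" "x$s = x'$s"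
  shows "agr p q s (slv p q s x y z) (slv p q s x' y' z')"
  using assms unfolding agr_def slv_def crp_def by auto

lemma crp_cong: "agr p q s y y' \<Longrightarrow> agr p q s z z' \<Longrightarrow> crp p q s y z = crp p q s y' z'"
  unfolding agr_def crp_def by simp

lemma dt_agr: "agr p q s x x' \<Longrightarrow> agr p q s y y' \<Longrightarrow> agr p q s z z' \<Longrightarrow> dt p q s x y z = dt p q s x' y' z'"
  unfolding agr_def by (rule dt_cong) auto

lemma dt_distinct: "dt p q s x y z \<noteq> 0 \<Longrightarrow> p \<noteq> q \<and> p \<noteq> s \<and> q \<noteq> s"
  unfolding dt_def crp_def by (auto simp: algebra_simps)

definition rot :: "'n \<Rightarrow> 'n \<Rightarrow> 'n \<Rightarrow> 'n \<Rightarrow> 'n \<Rightarrow> 'n \<Rightarrow> bool" where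
  "rot p q s p' q' s' \<longleftrightarrow> (p', q', s') = (p, q, s) \<or> (p', q', s') = (q, s, p) \<or> (p', q', s') = (s, p, q)"

lemma rot_dt: "rot p q s p' q' s' \<Longrightarrow> dt p' q' s' x y z = dt p q s x y z"
  unfolding rot_def using dt_rot[of p q s x y z] dt_rot[of q s p x y z] by auto

lemma rot_agr: "rot p q s p' q' s' \<Longrightarrow> agr p' q' s' x y = agr p q s x y"
  unfolding rot_def agr_def by auto

lemma rot_ext: "rot p q s p' q' s' \<Longrightarrow> ext p' q' s' = ext p q s"
  unfolding ext_def[abs_def] by (simp add: rot_dt)

lemma rot_rows: "rot p q s p' q' s' \<Longrightarrow> (r = p' \<or> r = q' \<or> r = s') \<longleftrightarrow> (r = p \<or> r = q \<or> r = s)"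
  unfolding rot_def by auto

lemma rot_distinct: "rot p q s p' q' s' \<Longrightarrow> p \<noteq> q \<Longrightarrow> p \<noteq> s \<Longrightarrow> q \<noteq> s \<Longrightarrow> p' \<noteq> q' \<and> p' \<noteq> s' \<and> q' \<noteq> s'"
  unfolding rot_def by auto

lemma choose_rot:
  assumes C: "dt p q s c1 c2 c3 \<noteq> 0"
    and ab: "a \<in> sp3 c1 c2 c3" "b \<in> sp3 c1 c2 c3" and i: "ind2 a b"
  obtains p' q' s' where "rot p q s p' q' s'" "crp p' q' s' a b \<noteq> 0"
  using K4[OF C _ _ _ ab i] dt_distinct[OF C] unfolding rot_def by blast

lemma ext_agr:
  assumes "dt p q s c1 c2 c3 \<noteq> 0" "p \<noteq> q" "p \<noteq> s" "q \<noteq> s"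
  shows "agr p q s (ext p q s c1 c2 c3 x) x"
  using ext_row[OF assms(1) _ assms(2-4)] unfolding agr_def by blast

lemma agr_sym: "agr p q s x y \<Longrightarrow> agr p q s y x" unfolding agr_def by auto
lemma agr_trans: "agr p q s x y \<Longrightarrow> agr p q s y z \<Longrightarrow> agr p q s x z" unfolding agr_def by auto
lemma agr_refl: "agr p q s x x" unfolding agr_def by auto

lemma ind2_sym: "ind2 a b \<Longrightarrow> ind2 b a"
  unfolding ind2_def by (metis add.commute)

lemma ind2_nz: assumes "ind2 a b" shows "a \<noteq> 0 \<and> b \<noteq> 0"
proof
  show "a \<noteq> 0"
  proof
    assume "a = 0" then have "1 *s a + 0 *s b = 0" by simp
    then show False using assms[unfolded ind2_def, rule_format, of 1 0] by simp
  qed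
  show "b \<noteq> 0"
  proof
    assume "b = 0" then have "0 *s a + 1 *s b = 0" by simp
    then show False using assms[unfolded ind2_def, rule_format, of 0 1] by simp
  qed
qed

lemma crp_ind2: "crp p q s a b \<noteq> 0 \<Longrightarrow> ind2 a b"
  unfolding crp_def by (rule minor2_ind2)

definition holv :: "'n::finite frame set \<Rightarrow> ('n frame \<Rightarrow> complex^'n) \<Rightarrow> bool" where
  "holv W F \<longleftrightarrow> (\<forall>r. hol W (\<lambda>t. F t $ r))"

lemma holv_coord[simp]: "holv W (\<lambda>t. t $ m)"
  unfolding holv_def by simp

lemma hol_crp: "holv W y \<Longrightarrow> holv W z \<Longrightarrow> hol W (\<lambda>t. crp p q s (y t) (z t))"
  unfolding holv_def crp_def by (intro hol_diff hol_mult) auto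

lemma hol_dt: "holv W x \<Longrightarrow> holv W y \<Longrightarrow> holv W z \<Longrightarrow> hol W (\<lambda>t. dt p q s (x t) (y t) (z t))"
  unfolding dt_def
  by (intro hol_add hol_mult hol_crp) (auto simp: holv_def)

lemma holv_ext:
  assumes "holv W c1" "holv W c2" "holv W c3" "holv W x"
    and "\<And>t. t \<in> W \<Longrightarrow> dt p q s (c1 t) (c2 t) (c3 t) \<noteq> 0"
  shows "holv W (\<lambda>t. ext p q s (c1 t) (c2 t) (c3 t) (x t))"
  unfolding holv_def ext_def
proof
  fix r
  show "hol W (\<lambda>t. ((dt p q s (x t) (c2 t) (c3 t) / dt p q s (c1 t) (c2 t) (c3 t)) *s c1 t +
           (dt p q s (c1 t) (x t) (c3 t) / dt p q s (c1 t) (c2 t) (c3 t)) *s c2 t +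
           (dt p q s (c1 t) (c2 t) (x t) / dt p q s (c1 t) (c2 t) (c3 t)) *s c3 t) $ r)"
    using assms unfolding vector_add_component vector_smult_component
    by (intro hol_add hol_mult hol_divide hol_dt) (auto simp: holv_def)
qed

lemma holv_slv:
  assumes "holv W x" "holv W y" "holv W z" "\<And>t. t \<in> W \<Longrightarrow> crp p q s (y t) (z t) \<noteq> 0"
  shows "holv W (\<lambda>t. slv p q s (x t) (y t) (z t))"
  unfolding holv_def
proof
  fix r
  show "hol W (\<lambda>t. slv p q s (x t) (y t) (z t) $ r)"
  proof (cases "r = p")
    case True
    then show ?thesis using assms unfolding slv_def
      by simp (intro hol_divide hol_diff hol_uminus hol_add hol_mult hol_crp; auto simp: holv_def)
  next
    case False
    then show ?thesis using assms unfolding slv_def holv_def by simp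
  qed
qed

lemma open_nz: "open A \<Longrightarrow> hol A f \<Longrightarrow> open {t \<in> A. f t \<noteq> 0}"
proof -
  assume "open A" "hol A f"
  then have "open (A \<inter> f -` (- {0}))"
    using continuous_open_preimage[OF hol_cont] by blast
  moreover have "A \<inter> f -` (- {0}) = {t \<in> A. f t \<noteq> 0}" by auto
  ultimately show ?thesis by simp
qed

definition SS :: "'n::finite frame set" where
  "SS = {z \<in> frame_dom. frame_proj z \<in> triangle_space}"

definition Inc :: "12 \<Rightarrow> 12 \<Rightarrow> 12 \<Rightarrow> 12 \<Rightarrow> 12 \<Rightarrow> 12 \<Rightarrow> 12 \<Rightarrow> 12 \<Rightarrow> 12 \<Rightarrow> 'n::finite frame \<Rightarrow> bool" where
  "Inc V1 V2 V3 A1 B1 A2 B2 A3 B3 z \<longleftrightarrow>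
     z$V1 \<noteq> 0 \<and> z$V2 \<noteq> 0 \<and> z$V3 \<noteq> 0 \<and> ind2 (z$A1) (z$B1) \<and> ind2 (z$A2) (z$B2) \<and> ind2 (z$A3) (z$B3) \<and>
     ind3 (z$9) (z$10) (z$11) \<and>
     z$V2 \<in> sp2 (z$A1) (z$B1) \<and> z$V3 \<in> sp2 (z$A1) (z$B1) \<and>
     z$V1 \<in> sp2 (z$A2) (z$B2) \<and> z$V3 \<in> sp2 (z$A2) (z$B2) \<and>
     z$V1 \<in> sp2 (z$A3) (z$B3) \<and> z$V2 \<in> sp2 (z$A3) (z$B3) \<and>
     z$A1 \<in> sp3 (z$9) (z$10) (z$11) \<and> z$B1 \<in> sp3 (z$9) (z$10) (z$11) \<and>
     z$A2 \<in> sp3 (z$9) (z$10) (z$11) \<and> z$B2 \<in> sp3 (z$9) (z$10) (z$11) \<and>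
     z$A3 \<in> sp3 (z$9) (z$10) (z$11) \<and> z$B3 \<in> sp3 (z$9) (z$10) (z$11)"

lemma frame_dom_iff: "z \<in> frame_dom \<longleftrightarrow> z$0 \<noteq> 0 \<and> z$1 \<noteq> 0 \<and> z$2 \<noteq> 0 \<and> ind2 (z$3) (z$4) \<and> ind2 (z$5) (z$6) \<and>
   ind2 (z$7) (z$8) \<and> ind3 (z$9) (z$10) (z$11)"
  unfolding frame_dom_def ind2_iff ind3_iff by auto

lemma Grass1_span': "v \<noteq> 0 \<Longrightarrow> vec.span {v} \<in> Grass (Suc 0)"
  using Grass1_span by simp

lemma SS_Inc: "z \<in> SS \<longleftrightarrow> Inc 0 1 2 3 4 5 6 7 8 z"
proof -
  have s2: "vec.subspace (sp2 a b)" for a b :: "complex^'n" by simp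
  have s3: "vec.subspace (sp3 a b c)" for a b c :: "complex^'n" by simp
  show ?thesis
    unfolding SS_def Inc_def frame_dom_iff frame_proj_def triangle_space_def
    by (auto simp: span1_sub[OF s2] span2_sub[OF s3] Grass1_span Grass1_span' Grass2_span Grass3_span)
qed

lemma sp2_comm: "sp2 a b = sp2 b a" by (simp add: insert_commute)

lemma Inc_swap1: "Inc V1 V2 V3 A1 B1 A2 B2 A3 B3 z = Inc V1 V2 V3 B1 A1 A2 B2 A3 B3 z"
  unfolding Inc_def by (auto simp: sp2_comm intro: ind2_sym)
lemma Inc_swap2: "Inc V1 V2 V3 A1 B1 A2 B2 A3 B3 z = Inc V1 V2 V3 A1 B1 B2 A2 A3 B3 z"
  unfolding Inc_def by (auto simp: sp2_comm intro: ind2_sym)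
lemma Inc_swap3: "Inc V1 V2 V3 A1 B1 A2 B2 A3 B3 z = Inc V1 V2 V3 A1 B1 A2 B2 B3 A3 z"
  unfolding Inc_def by (auto simp: sp2_comm intro: ind2_sym)
lemma Inc_cyc: "Inc V1 V2 V3 A1 B1 A2 B2 A3 B3 z = Inc V2 V3 V1 A2 B2 A3 B3 A1 B1 z"
  unfolding Inc_def by auto
lemma Inc_tr: "Inc V1 V2 V3 A1 B1 A2 B2 A3 B3 z = Inc V2 V1 V3 A2 B2 A1 B1 A3 B3 z"
  unfolding Inc_def by auto

lemma slv_rec:
  assumes r: "rot p q s \<rho> \<sigma> \<sigma>'" and y: "agr p q s y y'" and z: "agr p q s z z'"
    and x: "x$\<sigma> = x'$\<sigma>" "x$\<sigma>' = x'$\<sigma>'" and d: "dt p q s x' y' z' = 0" and c: "crp \<rho> \<sigma> \<sigma>' y' z' \<noteq> 0"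
  shows "agr p q s (slv \<rho> \<sigma> \<sigma>' x y z) x'"
proof -
  have "agr \<rho> \<sigma> \<sigma>' (slv \<rho> \<sigma> \<sigma>' x y z) (slv \<rho> \<sigma> \<sigma>' x' y' z')"
    using slv_cong[of \<rho> \<sigma> \<sigma>' y y' z z' x x'] y z x rot_agr[OF r] by simp
  moreover have "slv \<rho> \<sigma> \<sigma>' x' y' z' = x'" using slv_eq[of \<rho> \<sigma> \<sigma>' x' y' z'] d c rot_dt[OF r] by simp
  ultimately show ?thesis using rot_agr[OF r] by simp
qed

lemma slv_dt_rows:
  assumes r: "rot p q s \<rho> \<sigma> \<sigma>'" and d: "p \<noteq> q" "p \<noteq> s" "q \<noteq> s" and c: "crp \<rho> \<sigma> \<sigma>' y z \<noteq> 0"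
  shows "dt p q s (slv \<rho> \<sigma> \<sigma>' x y z) y z = 0"
  using slv_dt[OF c] rot_distinct[OF r d] rot_dt[OF r] by auto

lemma crp_rot_agr:
  assumes r: "rot p q s \<rho> \<sigma> \<sigma>'" "agr p q s y y'" "agr p q s z z'"
  shows "crp \<rho> \<sigma> \<sigma>' y z = crp \<rho> \<sigma> \<sigma>' y' z'"
  using crp_cong[of \<rho> \<sigma> \<sigma>' y y' z z'] r rot_agr[OF r(1)] by simp

lemma rot_sigma: "rot p q s \<rho> \<sigma> \<sigma>' \<Longrightarrow> p \<noteq> q \<Longrightarrow> p \<noteq> s \<Longrightarrow> q \<noteq> s \<Longrightarrow>
   (\<sigma> = p \<or> \<sigma> = q \<or> \<sigma> = s) \<and> (\<sigma>' = p \<or> \<sigma>' = q \<or> \<sigma>' = s) \<and> (\<rho> = p \<or> \<rho> = q \<or> \<rho> = s) \<and> \<sigma> \<noteq> \<rho> \<and> \<sigma>' \<noteq> \<rho> \<and> \<sigma> \<noteq> \<sigma>'"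
  unfolding rot_def by auto

lemma hol_minor[simp]: "hol W (\<lambda>z. z$a$k * z$b$l - z$a$l * z$b$k)"
  by (intro hol_diff hol_mult) auto

lemma open_minor_set:
  fixes A :: "'n::finite frame set"
  assumes "open A"
  shows "open {z \<in> A. z$a$k * z$b$l - z$a$l * z$b$k \<noteq> 0}"
  by (rule open_nz[OF assms]) simp

lemma holv_if: "holv W f \<Longrightarrow> holv W g \<Longrightarrow> holv W (\<lambda>t. if c then f t else g t)"
  by (cases c) auto

lemma hol_subset_holv: "holv W f \<Longrightarrow> V \<subseteq> W \<Longrightarrow> holv V f"
  unfolding holv_def using hol_subset by blast

lemma chart1:
  fixes y :: "'n::finite frame"
  assumes lab: "distinct [V1,V2,V3,A1,B1,A2,B2,A3,B3,9,10,11]"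
    and SSI: "\<And>z::'n frame. z \<in> SS \<longleftrightarrow> Inc V1 V2 V3 A1 B1 A2 B2 A3 B3 z"
    and y: "y \<in> SS" and d31: "ind2 (y$V3) (y$V1)" and d32: "ind2 (y$V3) (y$V2)"
  shows "complex_submanifold_at SS y"
proof -
  have Iy: "Inc V1 V2 V3 A1 B1 A2 B2 A3 B3 y" using SSI y by blast
  obtain p q s where C0: "dt p q s (y$9) (y$10) (y$11) \<noteq> 0"
    using Iy ind3_minor unfolding Inc_def by blast
  have pqs: "p \<noteq> q" "p \<noteq> s" "q \<noteq> s" using dt_distinct[OF C0] by auto
  have yA3: "y$A3 \<in> sp3 (y$9) (y$10) (y$11)" and yB3: "y$B3 \<in> sp3 (y$9) (y$10) (y$11)"
    and yV1: "y$V1 \<in> sp3 (y$9) (y$10) (y$11)" and yV2: "y$V2 \<in> sp3 (y$9) (y$10) (y$11)"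
    and yV3: "y$V3 \<in> sp3 (y$9) (y$10) (y$11)"
    using Iy unfolding Inc_def by (auto intro: sp2_sub_sp3)
  obtain \<rho>3 \<sigma>3 \<sigma>3' where r3: "rot p q s \<rho>3 \<sigma>3 \<sigma>3'" and c3: "crp \<rho>3 \<sigma>3 \<sigma>3' (y$A3) (y$B3) \<noteq> 0"
    using choose_rot[OF C0 yA3 yB3] Iy unfolding Inc_def by blast
  obtain \<rho>1 \<sigma>1 \<sigma>1' where r1: "rot p q s \<rho>1 \<sigma>1 \<sigma>1'" and c1: "crp \<rho>1 \<sigma>1 \<sigma>1' (y$V2) (y$V3) \<noteq> 0"
    using choose_rot[OF C0 yV2 yV3 ind2_sym[OF d32]] by blast
  obtain \<rho>2 \<sigma>2 \<sigma>2' where r2: "rot p q s \<rho>2 \<sigma>2 \<sigma>2'" and c2: "crp \<rho>2 \<sigma>2 \<sigma>2' (y$V1) (y$V3) \<noteq> 0"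
    using choose_rot[OF C0 yV1 yV3 ind2_sym[OF d31]] by blast
  obtain k1 l1 where m1: "y$A1$k1 * y$B1$l1 - y$A1$l1 * y$B1$k1 \<noteq> 0"
    using Iy ind2_minor unfolding Inc_def by blast
  obtain k2 l2 where m2: "y$A2$k2 * y$B2$l2 - y$A2$l2 * y$B2$k2 \<noteq> 0"
    using Iy ind2_minor unfolding Inc_def by blast
  note s3 = rot_sigma[OF r3 pqs] and s1 = rot_sigma[OF r1 pqs] and s2 = rot_sigma[OF r2 pqs]
  define rows where "rows r \<longleftrightarrow> r = p \<or> r = q \<or> r = s" for r
  define Ex where "Ex t x = ext p q s (t$9) (t$10) (t$11) x" for t :: "'n frame" and x
  define v1R where "v1R t = slv \<rho>3 \<sigma>3 \<sigma>3' (t$V1) (t$A3) (t$B3)" for t :: "'n frame"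
  define v2R where "v2R t = slv \<rho>3 \<sigma>3 \<sigma>3' (t$V2) (t$A3) (t$B3)" for t :: "'n frame"
  define a1R where "a1R t = slv \<rho>1 \<sigma>1 \<sigma>1' (t$A1) (v2R t) (t$V3)" for t :: "'n frame"
  define b1R where "b1R t = slv \<rho>1 \<sigma>1 \<sigma>1' (t$B1) (v2R t) (t$V3)" for t :: "'n frame"
  define a2R where "a2R t = slv \<rho>2 \<sigma>2 \<sigma>2' (t$A2) (v1R t) (t$V3)" for t :: "'n frame"
  define b2R where "b2R t = slv \<rho>2 \<sigma>2 \<sigma>2' (t$B2) (v1R t) (t$V3)" for t :: "'n frame"
  define R0 where "R0 t = (\<chi> m. if m = V1 then Ex t (v1R t) else if m = V2 then Ex t (v2R t)
     else if m = V3 then Ex t (t$V3) else if m = A1 then Ex t (a1R t) else if m = B1 then Ex t (b1R t)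
     else if m = A2 then Ex t (a2R t) else if m = B2 then Ex t (b2R t) else if m = A3 then Ex t (t$A3)
     else if m = B3 then Ex t (t$B3) else t$m)" for t :: "'n frame"
  define D where "D = {(m, r). (m \<in> {V1,V2,V3,A1,B1,A2,B2,A3,B3} \<and> \<not> rows r) \<or> ((m = V1 \<or> m = V2) \<and> r = \<rho>3)
     \<or> ((m = A1 \<or> m = B1) \<and> r = \<rho>1) \<or> ((m = A2 \<or> m = B2) \<and> r = \<rho>2)}"
  define W00 where "W00 = {t::'n frame. dt p q s (t$9) (t$10) (t$11) \<noteq> 0 \<and> crp \<rho>3 \<sigma>3 \<sigma>3' (t$A3) (t$B3) \<noteq> 0}"
  define W0 where "W0 = {t \<in> W00. crp \<rho>1 \<sigma>1 \<sigma>1' (v2R t) (t$V3) \<noteq> 0 \<and> crp \<rho>2 \<sigma>2 \<sigma>2' (v1R t) (t$V3) \<noteq> 0}"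
  define U where "U = {z. piD D z \<in> W0 \<and> z$A1$k1 * z$B1$l1 - z$A1$l1 * z$B1$k1 \<noteq> 0
     \<and> z$A2$k2 * z$B2$l2 - z$A2$l2 * z$B2$k2 \<noteq> 0}"
  have Lx: "V1 \<noteq> V2" "V1 \<noteq> V3" "V1 \<noteq> A1" "V1 \<noteq> B1" "V1 \<noteq> A2" "V1 \<noteq> B2" "V1 \<noteq> A3" "V1 \<noteq> B3"
    "V2 \<noteq> V3" "V2 \<noteq> A1" "V2 \<noteq> B1" "V2 \<noteq> A2" "V2 \<noteq> B2" "V2 \<noteq> A3" "V2 \<noteq> B3"
    "V3 \<noteq> A1" "V3 \<noteq> B1" "V3 \<noteq> A2" "V3 \<noteq> B2" "V3 \<noteq> A3" "V3 \<noteq> B3"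
    "A1 \<noteq> B1" "A1 \<noteq> A2" "A1 \<noteq> B2" "A1 \<noteq> A3" "A1 \<noteq> B3"
    "B1 \<noteq> A2" "B1 \<noteq> B2" "B1 \<noteq> A3" "B1 \<noteq> B3"
    "A2 \<noteq> B2" "A2 \<noteq> A3" "A2 \<noteq> B3" "B2 \<noteq> A3" "B2 \<noteq> B3" "A3 \<noteq> B3"
    using lab by auto
  have Lc: "m \<notin> {V1,V2,V3,A1,B1,A2,B2,A3,B3}" if "m = 9 \<or> m = 10 \<or> m = 11" for m
    using that lab by auto
  have rowsI: "rows p" "rows q" "rows s" by (auto simp: rows_def)
  have notD: "(m, r) \<notin> D" if "rows r" "m \<noteq> V1" "m \<noteq> V2" "m \<noteq> A1" "m \<noteq> B1" "m \<noteq> A2" "m \<noteq> B2" for m r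
    using that unfolding D_def by auto
  have notDV: "(m, r) \<notin> D" if "rows r" "r \<noteq> \<rho>3" "m = V1 \<or> m = V2" for m r
    using that Lx unfolding D_def by auto
  have notDA1: "(m, r) \<notin> D" if "rows r" "r \<noteq> \<rho>1" "m = A1 \<or> m = B1" for m r
    using that Lx unfolding D_def by auto
  have notDA2: "(m, r) \<notin> D" if "rows r" "r \<noteq> \<rho>2" "m = A2 \<or> m = B2" for m r
    using that Lx unfolding D_def by auto
  have Pc: "piD D z $ m = z $ m" if "m = 9 \<or> m = 10 \<or> m = 11" for z :: "'n frame" and m
    using Lc[OF that] by (simp add: vec_eq_iff D_def)
  have Pfree: "agr p q s (piD D z $ m) (z $ m)" if "m = V3 \<or> m = A3 \<or> m = B3" for z :: "'n frame" and m
  proof -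
    have "m \<noteq> V1" "m \<noteq> V2" "m \<noteq> A1" "m \<noteq> B1" "m \<noteq> A2" "m \<noteq> B2" using that Lx by auto
    then show ?thesis using notD[OF rowsI(1)] notD[OF rowsI(2)] notD[OF rowsI(3)] unfolding agr_def by simp
  qed
  have PV: "piD D z $ m $ \<sigma>3 = z $ m $ \<sigma>3" "piD D z $ m $ \<sigma>3' = z $ m $ \<sigma>3'" if "m = V1 \<or> m = V2" for z :: "'n frame" and m
    using notDV[OF _ _ that, of \<sigma>3] notDV[OF _ _ that, of \<sigma>3'] s3 by (auto simp: rows_def)
  have PA1: "piD D z $ m $ \<sigma>1 = z $ m $ \<sigma>1" "piD D z $ m $ \<sigma>1' = z $ m $ \<sigma>1'" if "m = A1 \<or> m = B1" for z :: "'n frame" and m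
    using notDA1[OF _ _ that, of \<sigma>1] notDA1[OF _ _ that, of \<sigma>1'] s1 by (auto simp: rows_def)
  have PA2: "piD D z $ m $ \<sigma>2 = z $ m $ \<sigma>2" "piD D z $ m $ \<sigma>2' = z $ m $ \<sigma>2'" if "m = A2 \<or> m = B2" for z :: "'n frame" and m
    using notDA2[OF _ _ that, of \<sigma>2] notDA2[OF _ _ that, of \<sigma>2'] s2 by (auto simp: rows_def)
  have Pother: "piD D z $ m = z $ m" if "m \<notin> {V1,V2,V3,A1,B1,A2,B2,A3,B3}" for z :: "'n frame" and m
    using that by (auto simp: vec_eq_iff D_def)
  have rec1: "agr p q s (v1R (piD D z)) (z$V1) \<and> agr p q s (v2R (piD D z)) (z$V2)"
    if zS: "Inc V1 V2 V3 A1 B1 A2 B2 A3 B3 z" and tW: "piD D z \<in> W00" for z :: "'n frame"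
  proof -
    let ?t = "piD D z"
    have c: "crp \<rho>3 \<sigma>3 \<sigma>3' (z$A3) (z$B3) \<noteq> 0"
      using tW crp_rot_agr[OF r3 Pfree[of A3 z] Pfree[of B3 z]] unfolding W00_def by simp
    show ?thesis unfolding v1R_def v2R_def
      using slv_rec[OF r3 Pfree[of A3 z] Pfree[of B3 z] PV(1,2)[of V1 z] dt_in_sp2 c]
        slv_rec[OF r3 Pfree[of A3 z] Pfree[of B3 z] PV(1,2)[of V2 z] dt_in_sp2 c] zS
      unfolding Inc_def by blast
  qed
  have rec2: "agr p q s (a1R (piD D z)) (z$A1) \<and> agr p q s (b1R (piD D z)) (z$B1) \<and>
              agr p q s (a2R (piD D z)) (z$A2) \<and> agr p q s (b2R (piD D z)) (z$B2)"
    if zS: "Inc V1 V2 V3 A1 B1 A2 B2 A3 B3 z" and tW: "piD D z \<in> W0" for z :: "'n frame"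
  proof -
    let ?t = "piD D z"
    have tW0: "?t \<in> W00" using tW unfolding W0_def by blast
    note rr = rec1[OF zS tW0]
    have e1: "crp \<rho>1 \<sigma>1 \<sigma>1' (z$V2) (z$V3) \<noteq> 0"
      using tW crp_rot_agr[OF r1 conjunct2[OF rr] Pfree[of V3 z]] unfolding W0_def by simp
    have e2: "crp \<rho>2 \<sigma>2 \<sigma>2' (z$V1) (z$V3) \<noteq> 0"
      using tW crp_rot_agr[OF r2 conjunct1[OF rr] Pfree[of V3 z]] unfolding W0_def by simp
    have i1: "z$A1 \<in> sp2 (z$V2) (z$V3) \<and> z$B1 \<in> sp2 (z$V2) (z$V3)"
      using Dm[of "z$V2" "z$A1" "z$B1" "z$V3"] crp_ind2[OF e1] zS unfolding Inc_def by auto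
    have i2: "z$A2 \<in> sp2 (z$V1) (z$V3) \<and> z$B2 \<in> sp2 (z$V1) (z$V3)"
      using Dm[of "z$V1" "z$A2" "z$B2" "z$V3"] crp_ind2[OF e2] zS unfolding Inc_def by auto
    show ?thesis unfolding a1R_def b1R_def a2R_def b2R_def
      using slv_rec[OF r1 conjunct2[OF rr] Pfree[of V3 z] PA1(1,2)[of A1 z] dt_in_sp2 e1]
        slv_rec[OF r1 conjunct2[OF rr] Pfree[of V3 z] PA1(1,2)[of B1 z] dt_in_sp2 e1]
        slv_rec[OF r2 conjunct1[OF rr] Pfree[of V3 z] PA2(1,2)[of A2 z] dt_in_sp2 e2]
        slv_rec[OF r2 conjunct1[OF rr] Pfree[of V3 z] PA2(1,2)[of B2 z] dt_in_sp2 e2] i1 i2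
      by blast
  qed
  note Lx' = Lx[THEN not_sym]
  have Ext: "Ex t x $ r = x $ r" if "rows r" "t \<in> W00" for t x r
    using ext_row[of p q s "t$9" "t$10" "t$11" r x] that pqs unfolding Ex_def W00_def rows_def by auto
  have o1: "open {t::'n frame \<in> UNIV. dt p q s (t$9) (t$10) (t$11) \<noteq> 0}"
    by (rule open_nz) (auto intro!: hol_dt)
  have o2: "open {t \<in> {t::'n frame \<in> UNIV. dt p q s (t$9) (t$10) (t$11) \<noteq> 0}. crp \<rho>3 \<sigma>3 \<sigma>3' (t$A3) (t$B3) \<noteq> 0}"
    by (rule open_nz[OF o1]) (auto intro!: hol_crp)
  have oW00: "open W00"
  proof -
    have "W00 = {t \<in> {t::'n frame \<in> UNIV. dt p q s (t$9) (t$10) (t$11) \<noteq> 0}. crp \<rho>3 \<sigma>3 \<sigma>3' (t$A3) (t$B3) \<noteq> 0}"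
      unfolding W00_def by blast
    then show ?thesis using o2 by simp
  qed
  have hv1: "holv W00 v1R" unfolding v1R_def by (rule holv_slv) (auto simp: W00_def)
  have hv2: "holv W00 v2R" unfolding v2R_def by (rule holv_slv) (auto simp: W00_def)
  have o3: "open {t \<in> W00. crp \<rho>1 \<sigma>1 \<sigma>1' (v2R t) (t$V3) \<noteq> 0}"
    by (rule open_nz[OF oW00]) (auto intro!: hol_crp hv2)
  have o4: "open {t \<in> {t \<in> W00. crp \<rho>1 \<sigma>1 \<sigma>1' (v2R t) (t$V3) \<noteq> 0}. crp \<rho>2 \<sigma>2 \<sigma>2' (v1R t) (t$V3) \<noteq> 0}"
    by (rule open_nz[OF o3]) (auto intro!: hol_crp hol_subset_holv[OF hv1])
  have oW0: "open W0"
  proof -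
    have "W0 = {t \<in> {t \<in> W00. crp \<rho>1 \<sigma>1 \<sigma>1' (v2R t) (t$V3) \<noteq> 0}. crp \<rho>2 \<sigma>2 \<sigma>2' (v1R t) (t$V3) \<noteq> 0}"
      unfolding W0_def by blast
    then show ?thesis using o4 by simp
  qed
  have W0W00: "W0 \<subseteq> W00" unfolding W0_def by blast
  have hv1': "holv W0 v1R" and hv2': "holv W0 v2R" using hol_subset_holv[OF hv1 W0W00] hol_subset_holv[OF hv2 W0W00] by auto
  have ha1: "holv W0 a1R" unfolding a1R_def by (rule holv_slv[OF holv_coord hv2' holv_coord]) (auto simp: W0_def)
  have hb1: "holv W0 b1R" unfolding b1R_def by (rule holv_slv[OF holv_coord hv2' holv_coord]) (auto simp: W0_def)
  have ha2: "holv W0 a2R" unfolding a2R_def by (rule holv_slv[OF holv_coord hv1' holv_coord]) (auto simp: W0_def)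
  have hb2: "holv W0 b2R" unfolding b2R_def by (rule holv_slv[OF holv_coord hv1' holv_coord]) (auto simp: W0_def)
  have hEx: "holv W0 (\<lambda>t. Ex t (X t))" if "holv W0 X" for X
    unfolding Ex_def by (rule holv_ext) (use that in \<open>auto simp: W0_def W00_def\<close>)
  have hR0: "hol W0 (\<lambda>t. R0 t $ m $ r)" for m r
  proof -
    have "holv W0 (\<lambda>t. R0 t $ m)" unfolding R0_def vec_lambda_beta
      by (intro holv_if hEx hv1' hv2' ha1 hb1 ha2 hb2 holv_coord)
    then show ?thesis unfolding holv_def by blast
  qed
  have agree: "R0 t $ m $ r = t $ m $ r" if tW: "t \<in> W0" and nD: "(m, r) \<notin> D" for t m r
  proof -
    have tW0: "t \<in> W00" using tW W0W00 by blast
    show ?thesis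
    proof (cases "m \<in> {V1,V2,V3,A1,B1,A2,B2,A3,B3}")
      case True
      then have rr: "rows r" using nD unfolding D_def by auto
      have V: "m = V1 \<or> m = V2 \<Longrightarrow> r \<noteq> \<rho>3" and A1': "m = A1 \<or> m = B1 \<Longrightarrow> r \<noteq> \<rho>1"
        and A2': "m = A2 \<or> m = B2 \<Longrightarrow> r \<noteq> \<rho>2" using nD unfolding D_def by auto
      from True show ?thesis
        using Ext[OF rr tW0] V A1' A2'
        by (auto simp: R0_def Lx Lx' v1R_def v2R_def a1R_def b1R_def a2R_def b2R_def slv_other)
    next
      case False
      then show ?thesis by (auto simp: R0_def)
    qed
  qed
  have F4: "z = R0 (piD D z)" if zS: "Inc V1 V2 V3 A1 B1 A2 B2 A3 B3 z" and tW: "piD D z \<in> W0" for z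
  proof -
    let ?t = "piD D z"
    have tW0: "?t \<in> W00" using tW W0W00 by blast
    have c9: "?t$9 = z$9" "?t$10 = z$10" "?t$11 = z$11" using Pc by auto
    have Cz: "dt p q s (z$9) (z$10) (z$11) \<noteq> 0" using tW0 c9 unfolding W00_def by simp
    have zc: "z$m \<in> sp3 (z$9) (z$10) (z$11)" if "m \<in> {V1,V2,V3,A1,B1,A2,B2,A3,B3}" for m
      using that zS unfolding Inc_def by (auto intro: sp2_sub_sp3)
    have ExE: "Ex ?t X = z$m" if "agr p q s X (z$m)" "m \<in> {V1,V2,V3,A1,B1,A2,B2,A3,B3}" for X m
      using ext_cong[OF that(1)] ext_id[OF Cz zc[OF that(2)]] unfolding Ex_def c9 by simp
    note rr1 = rec1[OF zS tW0] and rr2 = rec2[OF zS tW]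
    show ?thesis
    proof (subst vec_eq_iff, intro allI)
      fix m
      show "z $ m = R0 ?t $ m"
      proof (cases "m \<in> {V1,V2,V3,A1,B1,A2,B2,A3,B3}")
        case True
        then show ?thesis
          using ExE[of "v1R ?t" V1] ExE[of "v2R ?t" V2] ExE[of "a1R ?t" A1] ExE[of "b1R ?t" B1]
            ExE[of "a2R ?t" A2] ExE[of "b2R ?t" B2] ExE[of "?t$V3" V3] ExE[of "?t$A3" A3] ExE[of "?t$B3" B3]
            rr1 rr2 Pfree[of V3 z] Pfree[of A3 z] Pfree[of B3 z]
          by (auto simp: R0_def Lx Lx')
      next
        case False
        then show ?thesis using Pother[OF False] by (simp add: R0_def)
      qed
    qed
  qed
  have F5: "Inc V1 V2 V3 A1 B1 A2 B2 A3 B3 z" if zU: "z \<in> U" and zR: "z = R0 (piD D z)" for z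
  proof -
    let ?t = "piD D z"
    have tW: "?t \<in> W0" using zU unfolding U_def by blast
    have tW0: "?t \<in> W00" using tW W0W00 by blast
    have c9: "?t$9 = z$9" "?t$10 = z$10" "?t$11 = z$11" using Pc by auto
    have Ct: "dt p q s (?t$9) (?t$10) (?t$11) \<noteq> 0" using tW0 unfolding W00_def by simp
    have Cz: "dt p q s (z$9) (z$10) (z$11) \<noteq> 0" using Ct c9 by simp
    have zm: "z $ m = R0 ?t $ m" for m using arg_cong[OF zR, of "\<lambda>x. x $ m"] by simp
    have zE: "z$V1 = Ex ?t (v1R ?t)" "z$V2 = Ex ?t (v2R ?t)" "z$V3 = Ex ?t (?t$V3)"
      "z$A1 = Ex ?t (a1R ?t)" "z$B1 = Ex ?t (b1R ?t)" "z$A2 = Ex ?t (a2R ?t)" "z$B2 = Ex ?t (b2R ?t)"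
      "z$A3 = Ex ?t (?t$A3)" "z$B3 = Ex ?t (?t$B3)"
      by (simp_all add: zm R0_def Lx Lx')
    have ExA: "agr p q s (Ex ?t X) X" for X unfolding Ex_def by (rule ext_agr[OF Ct pqs])
    have ES: "Ex ?t X \<in> sp3 (z$9) (z$10) (z$11)" for X unfolding Ex_def c9 by (rule ext_in_sp3)
    have zS: "z$m \<in> sp3 (z$9) (z$10) (z$11)" if "m \<in> {V1,V2,V3,A1,B1,A2,B2,A3,B3}" for m
      using that zE ES by auto
    have aV1: "agr p q s (z$V1) (v1R ?t)" and aV2: "agr p q s (z$V2) (v2R ?t)" and aV3: "agr p q s (z$V3) (?t$V3)"
      and aA1: "agr p q s (z$A1) (a1R ?t)" and aB1: "agr p q s (z$B1) (b1R ?t)"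
      and aA2: "agr p q s (z$A2) (a2R ?t)" and aB2: "agr p q s (z$B2) (b2R ?t)"
      and aA3: "agr p q s (z$A3) (?t$A3)" and aB3: "agr p q s (z$B3) (?t$B3)"
      using zE ExA by simp_all
    have k3: "crp \<rho>3 \<sigma>3 \<sigma>3' (?t$A3) (?t$B3) \<noteq> 0" using tW0 unfolding W00_def by simp
    have k1: "crp \<rho>1 \<sigma>1 \<sigma>1' (v2R ?t) (?t$V3) \<noteq> 0" and k2: "crp \<rho>2 \<sigma>2 \<sigma>2' (v1R ?t) (?t$V3) \<noteq> 0"
      using tW unfolding W0_def by auto
    have i3: "ind2 (z$A3) (z$B3)"
      using k3 crp_rot_agr[OF r3 aA3 aB3] crp_ind2[of \<rho>3 \<sigma>3 \<sigma>3' "z$A3" "z$B3"] by simp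
    have i23: "ind2 (z$V2) (z$V3)"
      using k1 crp_rot_agr[OF r1 aV2 aV3] crp_ind2[of \<rho>1 \<sigma>1 \<sigma>1' "z$V2" "z$V3"] by simp
    have i13: "ind2 (z$V1) (z$V3)"
      using k2 crp_rot_agr[OF r2 aV1 aV3] crp_ind2[of \<rho>2 \<sigma>2 \<sigma>2' "z$V1" "z$V3"] by simp
    have inV: "z$m \<in> sp2 (z$A3) (z$B3)" if "m = V1 \<or> m = V2" for m
    proof -
      have "dt p q s (z$m) (z$A3) (z$B3) = 0"
        using that dt_agr[OF aV1 aA3 aB3] dt_agr[OF aV2 aA3 aB3]
          slv_dt_rows[OF r3 pqs k3] unfolding v1R_def v2R_def by auto
      then show ?thesis using K6[OF Cz pqs zS[of m] zS[of A3] zS[of B3] i3] that by auto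
    qed
    have in1: "z$m \<in> sp2 (z$V2) (z$V3)" if "m = A1 \<or> m = B1" for m
    proof -
      have "dt p q s (z$m) (z$V2) (z$V3) = 0"
        using that dt_agr[OF aA1 aV2 aV3] dt_agr[OF aB1 aV2 aV3]
          slv_dt_rows[OF r1 pqs k1] unfolding a1R_def b1R_def by auto
      then show ?thesis using K6[OF Cz pqs zS[of m] zS[of V2] zS[of V3] i23] that by auto
    qed
    have in2: "z$m \<in> sp2 (z$V1) (z$V3)" if "m = A2 \<or> m = B2" for m
    proof -
      have "dt p q s (z$m) (z$V1) (z$V3) = 0"
        using that dt_agr[OF aA2 aV1 aV3] dt_agr[OF aB2 aV1 aV3]
          slv_dt_rows[OF r2 pqs k2] unfolding a2R_def b2R_def by auto
      then show ?thesis using K6[OF Cz pqs zS[of m] zS[of V1] zS[of V3] i13] that by auto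
    qed
    have i1: "ind2 (z$A1) (z$B1)" using zU unfolding U_def by (auto intro: minor2_ind2)
    have i2: "ind2 (z$A2) (z$B2)" using zU unfolding U_def by (auto intro: minor2_ind2)
    have D1: "z$V2 \<in> sp2 (z$A1) (z$B1) \<and> z$V3 \<in> sp2 (z$A1) (z$B1)"
      using Dm[OF in1[of A1] in1[of B1] i1] by simp
    have D2: "z$V1 \<in> sp2 (z$A2) (z$B2) \<and> z$V3 \<in> sp2 (z$A2) (z$B2)"
      using Dm[OF in2[of A2] in2[of B2] i2] by simp
    show ?thesis unfolding Inc_def
      using ind2_nz[OF i23] ind2_nz[OF i13] i1 i2 i3 dt_nonzero_ind3[OF Cz] D1 D2 inV[of V1] inV[of V2]
        zS[of A1] zS[of B1] zS[of A2] zS[of B2] zS[of A3] zS[of B3]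
      by simp
  qed
  have yU: "y \<in> U"
  proof -
    let ?t = "piD D y"
    have tW0: "?t \<in> W00"
      using C0 Pc[of 9 y] Pc[of 10 y] Pc[of 11 y] c3 crp_rot_agr[OF r3 Pfree[of A3 y] Pfree[of B3 y]]
      unfolding W00_def by simp
    note rr = rec1[OF Iy tW0]
    have "crp \<rho>1 \<sigma>1 \<sigma>1' (v2R ?t) (?t$V3) \<noteq> 0"
      using c1 crp_rot_agr[OF r1 conjunct2[OF rr] Pfree[of V3 y]] by simp
    moreover have "crp \<rho>2 \<sigma>2 \<sigma>2' (v1R ?t) (?t$V3) \<noteq> 0"
      using c2 crp_rot_agr[OF r2 conjunct1[OF rr] Pfree[of V3 y]] by simp
    ultimately show ?thesis using tW0 m1 m2 unfolding U_def W0_def by blast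
  qed
  have oU: "open U"
  proof -
    have "U = {z \<in> {z \<in> {z. piD D z \<in> W0}. z$A1$k1 * z$B1$l1 - z$A1$l1 * z$B1$k1 \<noteq> 0}.
                z$A2$k2 * z$B2$l2 - z$A2$l2 * z$B2$k2 \<noteq> 0}" unfolding U_def by blast
    then show ?thesis using open_minor_set[OF open_minor_set[OF open_piD_vimage[OF oW0]]] by simp
  qed
  show ?thesis
  proof (rule chart_lemma[of W0 R0 D U y SS])
    show "open W0" by (rule oW0)
    show "\<And>m r. hol W0 (\<lambda>t. R0 t $ m $ r)" by (rule hR0)
    show "\<And>t m r. t \<in> W0 \<Longrightarrow> (m, r) \<notin> D \<Longrightarrow> R0 t $ m $ r = t $ m $ r" by (rule agree)
    show "open U" by (rule oU)
    show "y \<in> U" by (rule yU)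
    show "\<And>z. z \<in> U \<Longrightarrow> piD D z \<in> W0" unfolding U_def by blast
    show "\<And>z. z \<in> U \<Longrightarrow> z \<in> SS \<longleftrightarrow> z = R0 (piD D z)"
    proof -
      fix z assume zU: "z \<in> U"
      then have tW: "piD D z \<in> W0" unfolding U_def by blast
      show "z \<in> SS \<longleftrightarrow> z = R0 (piD D z)"
        using F4[OF _ tW] F5[OF zU] SSI[of z] by blast
    qed
    show "y \<in> SS" by (rule y)
  qed
qed

definition dot3 :: "'n::finite \<Rightarrow> 'n \<Rightarrow> 'n \<Rightarrow> complex^'n \<Rightarrow> complex^'n \<Rightarrow> complex" where
  "dot3 p q s x y = x$p*y$p + x$q*y$q + x$s*y$s"

lemma crv_rows:
  assumes "p \<noteq> q" "p \<noteq> s" "q \<noteq> s"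
  shows "crv p q s y z $ p = crp p q s y z" "crv p q s y z $ q = crp q s p y z" "crv p q s y z $ s = crp s p q y z"
  using assms by (auto simp: crv_def)

lemma dt_dot:
  assumes "p \<noteq> q" "p \<noteq> s" "q \<noteq> s"
  shows "dt p q s x y z = dot3 p q s x (crv p q s y z)"
  using assms by (simp add: dt_def dot3_def crv_rows)

lemma bac:
  assumes d: "p \<noteq> q" "p \<noteq> s" "q \<noteq> s"
  shows "crp p q s x (crv p q s a b) = a$p * dot3 p q s x b - b$p * dot3 p q s x a"
    "crp q s p x (crv p q s a b) = a$q * dot3 p q s x b - b$q * dot3 p q s x a"
    "crp s p q x (crv p q s a b) = a$s * dot3 p q s x b - b$s * dot3 p q s x a"
  using d by (simp_all add: crp_def crv_rows dot3_def algebra_simps)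

lemma prop_rows:
  assumes d: "p \<noteq> q" "p \<noteq> s" "q \<noteq> s"
    and z: "crp p q s u w = 0" "crp q s p u w = 0" "crp s p q u w = 0"
    and r: "r = p \<or> r = q \<or> r = s" and e: "e = p \<or> e = q \<or> e = s"
  shows "w$r * u$e = u$r * w$e"
  using z r e unfolding crp_def by (auto simp: algebra_simps)

lemma K5:
  assumes d: "p \<noteq> q" "p \<noteq> s" "q \<noteq> s"
    and x2: "dot3 p q s x a = 0" and x3: "dot3 p q s x b = 0"
    and r: "r = p \<or> r = q \<or> r = s" and e: "e = p \<or> e = q \<or> e = s"
  shows "x$r * crv p q s a b $ e = x$e * crv p q s a b $ r"
proof -
  have "crp p q s x (crv p q s a b) = 0" "crp q s p x (crv p q s a b) = 0" "crp s p q x (crv p q s a b) = 0"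
    using bac[OF d] x2 x3 by simp_all
  from prop_rows[OF d this r e] show ?thesis by (simp add: algebra_simps)
qed

lemma dot3_agr: "agr p q s x x' \<Longrightarrow> agr p q s y y' \<Longrightarrow> dot3 p q s x y = dot3 p q s x' y'"
  unfolding agr_def dot3_def by simp

lemma crv_agr:
  assumes "agr p q s y y'" "agr p q s z z'"
  shows "agr p q s (crv p q s y z) (crv p q s y' z')"
  using assms unfolding agr_def crv_def crp_def by auto

lemma K7:
  assumes C: "dt p q s c1 c2 c3 \<noteq> 0" and d: "p \<noteq> q" "p \<noteq> s" "q \<noteq> s"
    and ab: "a \<in> sp3 c1 c2 c3" "b \<in> sp3 c1 c2 c3" and cd: "c \<in> sp3 c1 c2 c3" "e \<in> sp3 c1 c2 c3"
    and i1: "ind2 a b" and i2: "ind2 c e"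
    and ne: "sp2 a b \<noteq> sp2 c e"
  obtains r where "r = p \<or> r = q \<or> r = s" "crv p q s (crv p q s a b) (crv p q s c e) $ r \<noteq> 0"
proof (rule ccontr)
  note th = that
  assume nt: "\<not> thesis"
  have Z: "crv p q s (crv p q s a b) (crv p q s c e) $ r = 0" if "r = p \<or> r = q \<or> r = s" for r
    using th[of r] nt that by blast
  define Na where "Na = crv p q s a b"
  define Nb where "Nb = crv p q s c e"
  have z: "crp p q s Na Nb = 0" "crp q s p Na Nb = 0" "crp s p q Na Nb = 0"
    using Z[of p] Z[of q] Z[of s] d by (auto simp: crv_rows Na_def Nb_def)
  have "Na $ p \<noteq> 0 \<or> Na $ q \<noteq> 0 \<or> Na $ s \<noteq> 0"
    using K4[OF C d ab i1] unfolding Na_def crv_rows[OF d] .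
  then obtain r0 where r0: "r0 = p \<or> r0 = q \<or> r0 = s" "Na $ r0 \<noteq> 0" by blast
  have "Nb $ p \<noteq> 0 \<or> Nb $ q \<noteq> 0 \<or> Nb $ s \<noteq> 0"
    using K4[OF C d cd i2] unfolding Nb_def crv_rows[OF d] .
  then obtain r1 where r1: "r1 = p \<or> r1 = q \<or> r1 = s" "Nb $ r1 \<noteq> 0" by blast
  define \<mu> where "\<mu> = Nb $ r0 / Na $ r0"
  have propN: "Nb $ r = \<mu> * Na $ r" if "r = p \<or> r = q \<or> r = s" for r
    using prop_rows[OF d z that r0(1)] r0(2) unfolding \<mu>_def by (simp add: field_simps)
  have "\<mu> \<noteq> 0" using propN[OF r1(1)] r1(2) by auto
  have dNb: "dot3 p q s x Nb = \<mu> * dot3 p q s x Na" for x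
    using propN d unfolding dot3_def by (simp add: algebra_simps)
  have cin: "x \<in> sp2 a b" if "x \<in> sp3 c1 c2 c3" "dot3 p q s x Nb = 0" for x
  proof -
    have "dt p q s x a b = 0" using that dNb \<open>\<mu> \<noteq> 0\<close> dt_dot[OF d] unfolding Na_def by simp
    then show ?thesis using K6[OF C d that(1) ab i1] by simp
  qed
  have "c \<in> sp2 a b" using cin[OF cd(1)] dt_dot[OF d, of c c e] dt_same12[of p q s c e] unfolding Nb_def by simp
  moreover have "e \<in> sp2 a b" using cin[OF cd(2)] dt_dot[OF d, of e c e] dt_same13[of p q s e c] unfolding Nb_def by simp
  ultimately have "a \<in> sp2 c e \<and> b \<in> sp2 c e" using Dm i2 by blast
  then have "sp2 a b \<subseteq> sp2 c e" using span2_sub[of "sp2 c e" a b] by simp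
  moreover have "sp2 c e \<subseteq> sp2 a b" using span2_sub[of "sp2 a b" c e] \<open>c \<in> sp2 a b\<close> \<open>e \<in> sp2 a b\<close> by simp
  ultimately show False using ne by blast
qed

lemma hol_if: "hol W f \<Longrightarrow> hol W g \<Longrightarrow> hol W (\<lambda>t. if c then f t else g t)"
  by (cases c) auto

lemma holv_crv: "holv W y \<Longrightarrow> holv W z \<Longrightarrow> holv W (\<lambda>t. crv p q s (y t) (z t))"
  unfolding holv_def crv_def vec_lambda_beta by (auto intro!: hol_if hol_crp[unfolded holv_def])

lemma dot3_crv1: "p \<noteq> q \<Longrightarrow> p \<noteq> s \<Longrightarrow> q \<noteq> s \<Longrightarrow> dot3 p q s (k *s crv p q s N M) N = 0"
  by (simp add: dot3_def crv_rows crp_def algebra_simps)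

lemma dot3_crv2: "p \<noteq> q \<Longrightarrow> p \<noteq> s \<Longrightarrow> q \<noteq> s \<Longrightarrow> dot3 p q s (k *s crv p q s N M) M = 0"
  by (simp add: dot3_def crv_rows crp_def algebra_simps)

lemma chart2:
  fixes y :: "'n::finite frame"
  assumes lab: "distinct [V1,V2,V3,A1,B1,A2,B2,A3,B3,9,10,11]"
    and SSI: "\<And>z::'n frame. z \<in> SS \<longleftrightarrow> Inc V1 V2 V3 A1 B1 A2 B2 A3 B3 z"
    and y: "y \<in> SS" and n13: "sp2 (y$A1) (y$B1) \<noteq> sp2 (y$A3) (y$B3)" and n23: "sp2 (y$A2) (y$B2) \<noteq> sp2 (y$A3) (y$B3)"
    and b1: "ind2 (y$B1) (y$V3)" and b2: "ind2 (y$B2) (y$V3)"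
  shows "complex_submanifold_at SS y"
proof -
  have Iy: "Inc V1 V2 V3 A1 B1 A2 B2 A3 B3 y" using SSI y by blast
  obtain p q s where C0: "dt p q s (y$9) (y$10) (y$11) \<noteq> 0"
    using Iy ind3_minor unfolding Inc_def by blast
  have pqs: "p \<noteq> q" "p \<noteq> s" "q \<noteq> s" using dt_distinct[OF C0] by auto
  have yS: "y$m \<in> sp3 (y$9) (y$10) (y$11)" if "m \<in> {V1,V2,V3,A1,B1,A2,B2,A3,B3}" for m
    using Iy that unfolding Inc_def by (auto intro: sp2_sub_sp3)
  obtain \<rho>1 \<sigma>1 \<sigma>1' where r1: "rot p q s \<rho>1 \<sigma>1 \<sigma>1'" and c1: "crp \<rho>1 \<sigma>1 \<sigma>1' (y$B1) (y$V3) \<noteq> 0"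
    using choose_rot[OF C0 yS[of B1] yS[of V3] b1] by auto
  obtain \<rho>2 \<sigma>2 \<sigma>2' where r2: "rot p q s \<rho>2 \<sigma>2 \<sigma>2'" and c2: "crp \<rho>2 \<sigma>2 \<sigma>2' (y$B2) (y$V3) \<noteq> 0"
    using choose_rot[OF C0 yS[of B2] yS[of V3] b2] by auto
  obtain e1 where e1: "e1 = p \<or> e1 = q \<or> e1 = s"
    and g1y: "crv p q s (crv p q s (y$A2) (y$B2)) (crv p q s (y$A3) (y$B3)) $ e1 \<noteq> 0"
    using K7[OF C0 pqs yS[of A2] yS[of B2] yS[of A3] yS[of B3] _ _ n23] Iy unfolding Inc_def by auto
  obtain e2 where e2: "e2 = p \<or> e2 = q \<or> e2 = s"
    and g2y: "crv p q s (crv p q s (y$A1) (y$B1)) (crv p q s (y$A3) (y$B3)) $ e2 \<noteq> 0"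
    using K7[OF C0 pqs yS[of A1] yS[of B1] yS[of A3] yS[of B3] _ _ n13] Iy unfolding Inc_def by auto
  obtain k1 l1 where m1: "y$A1$k1 * y$B1$l1 - y$A1$l1 * y$B1$k1 \<noteq> 0"
    using Iy ind2_minor unfolding Inc_def by blast
  obtain k2 l2 where m2: "y$A2$k2 * y$B2$l2 - y$A2$l2 * y$B2$k2 \<noteq> 0"
    using Iy ind2_minor unfolding Inc_def by blast
  obtain k3 l3 where m3: "y$A3$k3 * y$B3$l3 - y$A3$l3 * y$B3$k3 \<noteq> 0"
    using Iy ind2_minor unfolding Inc_def by blast
  note s1 = rot_sigma[OF r1 pqs] and s2 = rot_sigma[OF r2 pqs]
  have Vnz: "y$Vi$e \<noteq> 0" if "Vi \<in> {V1, V2}" "e = p \<or> e = q \<or> e = s"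
    "y$Vi \<in> sp2 (y$Aj) (y$Bj)" "y$Vi \<in> sp2 (y$A3) (y$B3)"
    "crv p q s (crv p q s (y$Aj) (y$Bj)) (crv p q s (y$A3) (y$B3)) $ e \<noteq> 0" for Vi Aj Bj e
  proof
    assume z: "y$Vi$e = 0"
    let ?g = "crv p q s (crv p q s (y$Aj) (y$Bj)) (crv p q s (y$A3) (y$B3))"
    have "dot3 p q s (y$Vi) (crv p q s (y$Aj) (y$Bj)) = 0" "dot3 p q s (y$Vi) (crv p q s (y$A3) (y$B3)) = 0"
      using dt_in_sp2[OF that(3), of p q s] dt_in_sp2[OF that(4), of p q s] by (simp_all add: dt_dot[OF pqs])
    then have "y$Vi$r * ?g $ e = y$Vi$e * ?g $ r" if "r = p \<or> r = q \<or> r = s" for r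
      using K5[OF pqs _ _ that \<open>e = p \<or> e = q \<or> e = s\<close>] by blast
    then have "agr p q s (y$Vi) 0" using z that(5) unfolding agr_def by auto
    then have "y$Vi = 0" using rows_determine[OF C0 yS[of Vi] _] that(1) vec.span_zero by auto
    then show False using Iy that(1) unfolding Inc_def by auto
  qed
  have v1e: "y$V1$e1 \<noteq> 0" using Vnz[of V1 e1 A2 B2] e1 g1y Iy unfolding Inc_def by auto
  have v2e: "y$V2$e2 \<noteq> 0" using Vnz[of V2 e2 A1 B1] e2 g2y Iy unfolding Inc_def by auto
  define rows where "rows r \<longleftrightarrow> r = p \<or> r = q \<or> r = s" for r
  define Ex where "Ex t x = ext p q s (t$9) (t$10) (t$11) x" for t :: "'n frame" and x
  define a1R where "a1R t = slv \<rho>1 \<sigma>1 \<sigma>1' (t$A1) (t$B1) (t$V3)" for t :: "'n frame"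
  define a2R where "a2R t = slv \<rho>2 \<sigma>2 \<sigma>2' (t$A2) (t$B2) (t$V3)" for t :: "'n frame"
  define g1 where "g1 t = crv p q s (crv p q s (a2R t) (t$B2)) (crv p q s (t$A3) (t$B3))" for t :: "'n frame"
  define g2 where "g2 t = crv p q s (crv p q s (a1R t) (t$B1)) (crv p q s (t$A3) (t$B3))" for t :: "'n frame"
  define v1R where "v1R t = (t$V1$e1 / g1 t $ e1) *s g1 t" for t :: "'n frame"
  define v2R where "v2R t = (t$V2$e2 / g2 t $ e2) *s g2 t" for t :: "'n frame"
  define R0 where "R0 t = (\<chi> m. if m = V1 then Ex t (v1R t) else if m = V2 then Ex t (v2R t)
     else if m = V3 then Ex t (t$V3) else if m = A1 then Ex t (a1R t) else if m = B1 then Ex t (t$B1)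
     else if m = A2 then Ex t (a2R t) else if m = B2 then Ex t (t$B2) else if m = A3 then Ex t (t$A3)
     else if m = B3 then Ex t (t$B3) else t$m)" for t :: "'n frame"
  define D where "D = {(m, r). (m \<in> {V1,V2,V3,A1,B1,A2,B2,A3,B3} \<and> \<not> rows r) \<or> (m = A1 \<and> r = \<rho>1)
     \<or> (m = A2 \<and> r = \<rho>2) \<or> (m = V1 \<and> r \<noteq> e1) \<or> (m = V2 \<and> r \<noteq> e2)}"
  define W00 where "W00 = {t::'n frame. dt p q s (t$9) (t$10) (t$11) \<noteq> 0 \<and> crp \<rho>1 \<sigma>1 \<sigma>1' (t$B1) (t$V3) \<noteq> 0
     \<and> crp \<rho>2 \<sigma>2 \<sigma>2' (t$B2) (t$V3) \<noteq> 0}"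
  define W0 where "W0 = {t \<in> W00. g1 t $ e1 \<noteq> 0 \<and> g2 t $ e2 \<noteq> 0}"
  define U where "U = {z. piD D z \<in> W0 \<and> z$V1$e1 \<noteq> 0 \<and> z$V2$e2 \<noteq> 0
     \<and> z$A1$k1 * z$B1$l1 - z$A1$l1 * z$B1$k1 \<noteq> 0
     \<and> z$A2$k2 * z$B2$l2 - z$A2$l2 * z$B2$k2 \<noteq> 0 \<and> z$A3$k3 * z$B3$l3 - z$A3$l3 * z$B3$k3 \<noteq> 0}"
  have Lx: "V1 \<noteq> V2" "V1 \<noteq> V3" "V1 \<noteq> A1" "V1 \<noteq> B1" "V1 \<noteq> A2" "V1 \<noteq> B2" "V1 \<noteq> A3" "V1 \<noteq> B3"
    "V2 \<noteq> V3" "V2 \<noteq> A1" "V2 \<noteq> B1" "V2 \<noteq> A2" "V2 \<noteq> B2" "V2 \<noteq> A3" "V2 \<noteq> B3"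
    "V3 \<noteq> A1" "V3 \<noteq> B1" "V3 \<noteq> A2" "V3 \<noteq> B2" "V3 \<noteq> A3" "V3 \<noteq> B3"
    "A1 \<noteq> B1" "A1 \<noteq> A2" "A1 \<noteq> B2" "A1 \<noteq> A3" "A1 \<noteq> B3"
    "B1 \<noteq> A2" "B1 \<noteq> B2" "B1 \<noteq> A3" "B1 \<noteq> B3"
    "A2 \<noteq> B2" "A2 \<noteq> A3" "A2 \<noteq> B3" "B2 \<noteq> A3" "B2 \<noteq> B3" "A3 \<noteq> B3"
    using lab by auto
  note Lx' = Lx[THEN not_sym]
  have Lc: "m \<notin> {V1,V2,V3,A1,B1,A2,B2,A3,B3}" if "m = 9 \<or> m = 10 \<or> m = 11" for m
    using that lab by auto
  have rowsI: "rows p" "rows q" "rows s" by (auto simp: rows_def)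
  have notD: "(m, r) \<notin> D" if "rows r" "m \<noteq> V1" "m \<noteq> V2" "m \<noteq> A1" "m \<noteq> A2" for m r
    using that unfolding D_def by auto
  have notDA1: "(A1, r) \<notin> D" if "rows r" "r \<noteq> \<rho>1" for r
    using that Lx unfolding D_def by auto
  have notDA2: "(A2, r) \<notin> D" if "rows r" "r \<noteq> \<rho>2" for r
    using that Lx unfolding D_def by auto
  have notDV1: "(V1, e1) \<notin> D" using Lx e1 unfolding D_def rows_def by auto
  have notDV2: "(V2, e2) \<notin> D" using Lx e2 unfolding D_def rows_def by auto
  have Pc: "piD D z $ m = z $ m" if "m = 9 \<or> m = 10 \<or> m = 11" for z :: "'n frame" and m
    using Lc[OF that] by (simp add: vec_eq_iff D_def)
  have Pfree: "agr p q s (piD D z $ m) (z $ m)" if "m = V3 \<or> m = A3 \<or> m = B3 \<or> m = B1 \<or> m = B2" for z :: "'n frame" and m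
  proof -
    have "m \<noteq> V1" "m \<noteq> V2" "m \<noteq> A1" "m \<noteq> A2" using that Lx by auto
    then show ?thesis using notD[OF rowsI(1)] notD[OF rowsI(2)] notD[OF rowsI(3)] unfolding agr_def by simp
  qed
  have PA1: "piD D z $ A1 $ \<sigma>1 = z $ A1 $ \<sigma>1" "piD D z $ A1 $ \<sigma>1' = z $ A1 $ \<sigma>1'" for z :: "'n frame"
    using notDA1[of \<sigma>1] notDA1[of \<sigma>1'] s1 by (auto simp: rows_def)
  have PA2: "piD D z $ A2 $ \<sigma>2 = z $ A2 $ \<sigma>2" "piD D z $ A2 $ \<sigma>2' = z $ A2 $ \<sigma>2'" for z :: "'n frame"
    using notDA2[of \<sigma>2] notDA2[of \<sigma>2'] s2 by (auto simp: rows_def)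
  have PV1: "piD D z $ V1 $ e1 = z $ V1 $ e1" and PV2: "piD D z $ V2 $ e2 = z $ V2 $ e2" for z :: "'n frame"
    using notDV1 notDV2 by auto
  have Pother: "piD D z $ m = z $ m" if "m \<notin> {V1,V2,V3,A1,B1,A2,B2,A3,B3}" for z :: "'n frame" and m
    using that by (auto simp: vec_eq_iff D_def)
  have rec1: "agr p q s (a1R (piD D z)) (z$A1) \<and> agr p q s (a2R (piD D z)) (z$A2)"
    if zS: "Inc V1 V2 V3 A1 B1 A2 B2 A3 B3 z" and tW: "piD D z \<in> W00" for z :: "'n frame"
  proof -
    have k1: "crp \<rho>1 \<sigma>1 \<sigma>1' (z$B1) (z$V3) \<noteq> 0"
      using tW crp_rot_agr[OF r1 Pfree[of B1 z] Pfree[of V3 z]] unfolding W00_def by simp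
    have k2: "crp \<rho>2 \<sigma>2 \<sigma>2' (z$B2) (z$V3) \<noteq> 0"
      using tW crp_rot_agr[OF r2 Pfree[of B2 z] Pfree[of V3 z]] unfolding W00_def by simp
    have d1: "dt p q s (z$A1) (z$B1) (z$V3) = 0"
      using dt_in_sp2[of "z$V3" "z$A1" "z$B1"] dt_cyc[of p q s "z$V3" "z$A1" "z$B1"] zS unfolding Inc_def by simp
    have d2: "dt p q s (z$A2) (z$B2) (z$V3) = 0"
      using dt_in_sp2[of "z$V3" "z$A2" "z$B2"] dt_cyc[of p q s "z$V3" "z$A2" "z$B2"] zS unfolding Inc_def by simp
    show ?thesis unfolding a1R_def a2R_def
      using slv_rec[OF r1 Pfree[of B1 z] Pfree[of V3 z] PA1 d1 k1]
        slv_rec[OF r2 Pfree[of B2 z] Pfree[of V3 z] PA2 d2 k2] by blast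
  qed
  have rec2: "agr p q s (v1R (piD D z)) (z$V1) \<and> agr p q s (v2R (piD D z)) (z$V2)"
    if zS: "Inc V1 V2 V3 A1 B1 A2 B2 A3 B3 z" and tW: "piD D z \<in> W0" for z :: "'n frame"
  proof -
    let ?t = "piD D z"
    have tW0: "?t \<in> W00" using tW unfolding W0_def by blast
    note rr = rec1[OF zS tW0]
    have ag1: "agr p q s (g1 ?t) (crv p q s (crv p q s (z$A2) (z$B2)) (crv p q s (z$A3) (z$B3)))"
      unfolding g1_def by (intro crv_agr conjunct2[OF rr] Pfree) auto
    have ag2: "agr p q s (g2 ?t) (crv p q s (crv p q s (z$A1) (z$B1)) (crv p q s (z$A3) (z$B3)))"
      unfolding g2_def by (intro crv_agr conjunct1[OF rr] Pfree) auto
    have ne1: "g1 ?t $ e1 \<noteq> 0" and ne2: "g2 ?t $ e2 \<noteq> 0" using tW unfolding W0_def by auto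
    have gen: "agr p q s ((x$e / g $ e) *s g) x"
      if "agr p q s g (crv p q s (crv p q s a b) (crv p q s c d))" "g $ e \<noteq> 0" "e = p \<or> e = q \<or> e = s"
        "x \<in> sp2 a b" "x \<in> sp2 c d" for x g a b c d e
    proof -
      have "dot3 p q s x (crv p q s a b) = 0" "dot3 p q s x (crv p q s c d) = 0"
        using dt_in_sp2[OF that(4), of p q s] dt_in_sp2[OF that(5), of p q s] by (simp_all add: dt_dot[OF pqs])
      then have "x$r * (crv p q s (crv p q s a b) (crv p q s c d)) $ e = x$e * (crv p q s (crv p q s a b) (crv p q s c d)) $ r"
        if "r = p \<or> r = q \<or> r = s" for r
        using K5[OF pqs _ _ that \<open>e = p \<or> e = q \<or> e = s\<close>] by blast
      then have "x$r * g $ e = x$e * g $ r" if "r = p \<or> r = q \<or> r = s" for r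
        using that \<open>agr p q s g _\<close> \<open>e = p \<or> e = q \<or> e = s\<close> unfolding agr_def by auto
      then show ?thesis using that(2) unfolding agr_def by (auto simp: field_simps)
    qed
    have "agr p q s ((z$V1$e1 / g1 ?t $ e1) *s g1 ?t) (z$V1)"
      by (rule gen[OF ag1 ne1 e1]) (use zS in \<open>auto simp: Inc_def\<close>)
    moreover have "agr p q s ((z$V2$e2 / g2 ?t $ e2) *s g2 ?t) (z$V2)"
      by (rule gen[OF ag2 ne2 e2]) (use zS in \<open>auto simp: Inc_def\<close>)
    ultimately show ?thesis unfolding v1R_def v2R_def PV1 PV2 by blast
  qed
  have Ext: "Ex t x $ r = x $ r" if "rows r" "t \<in> W00" for t x r
    using ext_row[of p q s "t$9" "t$10" "t$11" r x] that pqs unfolding Ex_def W00_def rows_def by auto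
  have o1: "open {t::'n frame \<in> UNIV. dt p q s (t$9) (t$10) (t$11) \<noteq> 0}"
    by (rule open_nz) (auto intro!: hol_dt)
  have o2: "open {t \<in> {t::'n frame \<in> UNIV. dt p q s (t$9) (t$10) (t$11) \<noteq> 0}. crp \<rho>1 \<sigma>1 \<sigma>1' (t$B1) (t$V3) \<noteq> 0}"
    by (rule open_nz[OF o1]) (auto intro!: hol_crp)
  have o3: "open {t \<in> {t \<in> {t::'n frame \<in> UNIV. dt p q s (t$9) (t$10) (t$11) \<noteq> 0}. crp \<rho>1 \<sigma>1 \<sigma>1' (t$B1) (t$V3) \<noteq> 0}.
      crp \<rho>2 \<sigma>2 \<sigma>2' (t$B2) (t$V3) \<noteq> 0}"
    by (rule open_nz[OF o2]) (auto intro!: hol_crp)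
  have oW00: "open W00"
  proof -
    have "W00 = {t \<in> {t \<in> {t::'n frame \<in> UNIV. dt p q s (t$9) (t$10) (t$11) \<noteq> 0}. crp \<rho>1 \<sigma>1 \<sigma>1' (t$B1) (t$V3) \<noteq> 0}.
      crp \<rho>2 \<sigma>2 \<sigma>2' (t$B2) (t$V3) \<noteq> 0}"
      unfolding W00_def by blast
    then show ?thesis using o3 by simp
  qed
  have ha1: "holv W00 a1R" unfolding a1R_def by (rule holv_slv) (auto simp: W00_def)
  have ha2: "holv W00 a2R" unfolding a2R_def by (rule holv_slv) (auto simp: W00_def)
  have hg1: "holv W00 g1" unfolding g1_def by (intro holv_crv ha2 holv_coord)
  have hg2: "holv W00 g2" unfolding g2_def by (intro holv_crv ha1 holv_coord)
  have o4: "open {t \<in> W00. g1 t $ e1 \<noteq> 0}"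
    by (rule open_nz[OF oW00]) (use hg1 in \<open>simp add: holv_def\<close>)
  have o5: "open {t \<in> {t \<in> W00. g1 t $ e1 \<noteq> 0}. g2 t $ e2 \<noteq> 0}"
    by (rule open_nz[OF o4]) (use hg2 in \<open>auto simp: holv_def intro: hol_subset\<close>)
  have oW0: "open W0"
  proof -
    have "W0 = {t \<in> {t \<in> W00. g1 t $ e1 \<noteq> 0}. g2 t $ e2 \<noteq> 0}" unfolding W0_def by blast
    then show ?thesis using o5 by simp
  qed
  have W0W00: "W0 \<subseteq> W00" unfolding W0_def by blast
  have ha1': "holv W0 a1R" and ha2': "holv W0 a2R" and hg1': "holv W0 g1" and hg2': "holv W0 g2"
    using hol_subset_holv[OF ha1 W0W00] hol_subset_holv[OF ha2 W0W00]
      hol_subset_holv[OF hg1 W0W00] hol_subset_holv[OF hg2 W0W00] by auto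
  have hv1: "holv W0 v1R" unfolding holv_def v1R_def vector_smult_component
  proof
    fix r show "hol W0 (\<lambda>t. t $ V1 $ e1 / g1 t $ e1 * g1 t $ r)"
      using hg1' unfolding holv_def by (intro hol_mult hol_divide) (auto simp: W0_def)
  qed
  have hv2: "holv W0 v2R" unfolding holv_def v2R_def vector_smult_component
  proof
    fix r show "hol W0 (\<lambda>t. t $ V2 $ e2 / g2 t $ e2 * g2 t $ r)"
      using hg2' unfolding holv_def by (intro hol_mult hol_divide) (auto simp: W0_def)
  qed
  have hEx: "holv W0 (\<lambda>t. Ex t (X t))" if "holv W0 X" for X
    unfolding Ex_def by (rule holv_ext) (use that in \<open>auto simp: W0_def W00_def\<close>)
  have hR0: "hol W0 (\<lambda>t. R0 t $ m $ r)" for m r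
  proof -
    have "holv W0 (\<lambda>t. R0 t $ m)" unfolding R0_def vec_lambda_beta
      by (intro holv_if hEx hv1 hv2 ha1' ha2' holv_coord)
    then show ?thesis unfolding holv_def by blast
  qed
  have agree: "R0 t $ m $ r = t $ m $ r" if tW: "t \<in> W0" and nD: "(m, r) \<notin> D" for t m r
  proof -
    have tW0: "t \<in> W00" using tW W0W00 by blast
    have ne1: "g1 t $ e1 \<noteq> 0" and ne2: "g2 t $ e2 \<noteq> 0" using tW unfolding W0_def by auto
    show ?thesis
    proof (cases "m \<in> {V1,V2,V3,A1,B1,A2,B2,A3,B3}")
      case True
      then have rr: "rows r" using nD unfolding D_def by auto
      have A1': "m = A1 \<Longrightarrow> r \<noteq> \<rho>1" and A2': "m = A2 \<Longrightarrow> r \<noteq> \<rho>2"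
        and V1': "m = V1 \<Longrightarrow> r = e1" and V2': "m = V2 \<Longrightarrow> r = e2" using nD unfolding D_def by auto
      from True show ?thesis
        using Ext[OF rr tW0] A1' A2' V1' V2' ne1 ne2
        by (auto simp: R0_def Lx Lx' v1R_def v2R_def a1R_def a2R_def slv_other)
    next
      case False
      then show ?thesis by (auto simp: R0_def)
    qed
  qed
  have F4: "z = R0 (piD D z)" if zS: "Inc V1 V2 V3 A1 B1 A2 B2 A3 B3 z" and tW: "piD D z \<in> W0" for z
  proof -
    let ?t = "piD D z"
    have tW0: "?t \<in> W00" using tW W0W00 by blast
    have c9: "?t$9 = z$9" "?t$10 = z$10" "?t$11 = z$11" using Pc by auto
    have Cz: "dt p q s (z$9) (z$10) (z$11) \<noteq> 0" using tW0 c9 unfolding W00_def by simp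
    have zc: "z$m \<in> sp3 (z$9) (z$10) (z$11)" if "m \<in> {V1,V2,V3,A1,B1,A2,B2,A3,B3}" for m
      using that zS unfolding Inc_def by (auto intro: sp2_sub_sp3)
    have ExE: "Ex ?t X = z$m" if "agr p q s X (z$m)" "m \<in> {V1,V2,V3,A1,B1,A2,B2,A3,B3}" for X m
      using ext_cong[OF that(1)] ext_id[OF Cz zc[OF that(2)]] unfolding Ex_def c9 by simp
    note rr1 = rec1[OF zS tW0] and rr2 = rec2[OF zS tW]
    show ?thesis
    proof (subst vec_eq_iff, intro allI)
      fix m
      show "z $ m = R0 ?t $ m"
      proof (cases "m \<in> {V1,V2,V3,A1,B1,A2,B2,A3,B3}")
        case True
        then show ?thesis
          using ExE[of "v1R ?t" V1] ExE[of "v2R ?t" V2] ExE[of "a1R ?t" A1] ExE[of "?t$B1" B1]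
            ExE[of "a2R ?t" A2] ExE[of "?t$B2" B2] ExE[of "?t$V3" V3] ExE[of "?t$A3" A3] ExE[of "?t$B3" B3]
            rr1 rr2 Pfree[of V3 z] Pfree[of A3 z] Pfree[of B3 z] Pfree[of B1 z] Pfree[of B2 z]
          by (auto simp: R0_def Lx Lx')
      next
        case False
        then show ?thesis using Pother[OF False] by (simp add: R0_def)
      qed
    qed
  qed
  have F5: "Inc V1 V2 V3 A1 B1 A2 B2 A3 B3 z" if zU: "z \<in> U" and zR: "z = R0 (piD D z)" for z
  proof -
    let ?t = "piD D z"
    have tW: "?t \<in> W0" using zU unfolding U_def by blast
    have tW0: "?t \<in> W00" using tW W0W00 by blast
    have c9: "?t$9 = z$9" "?t$10 = z$10" "?t$11 = z$11" using Pc by auto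
    have Ct: "dt p q s (?t$9) (?t$10) (?t$11) \<noteq> 0" using tW0 unfolding W00_def by simp
    have Cz: "dt p q s (z$9) (z$10) (z$11) \<noteq> 0" using Ct c9 by simp
    have zm: "z $ m = R0 ?t $ m" for m using arg_cong[OF zR, of "\<lambda>x. x $ m"] by simp
    have zE: "z$V1 = Ex ?t (v1R ?t)" "z$V2 = Ex ?t (v2R ?t)" "z$V3 = Ex ?t (?t$V3)"
      "z$A1 = Ex ?t (a1R ?t)" "z$B1 = Ex ?t (?t$B1)" "z$A2 = Ex ?t (a2R ?t)" "z$B2 = Ex ?t (?t$B2)"
      "z$A3 = Ex ?t (?t$A3)" "z$B3 = Ex ?t (?t$B3)"
      by (simp_all add: zm R0_def Lx Lx')
    have ExA: "agr p q s (Ex ?t X) X" for X unfolding Ex_def by (rule ext_agr[OF Ct pqs])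
    have ES: "Ex ?t X \<in> sp3 (z$9) (z$10) (z$11)" for X unfolding Ex_def c9 by (rule ext_in_sp3)
    have zS: "z$m \<in> sp3 (z$9) (z$10) (z$11)" if "m \<in> {V1,V2,V3,A1,B1,A2,B2,A3,B3}" for m
      using that zE ES by auto
    have aV1: "agr p q s (z$V1) (v1R ?t)" and aV2: "agr p q s (z$V2) (v2R ?t)" and aV3: "agr p q s (z$V3) (?t$V3)"
      and aA1: "agr p q s (z$A1) (a1R ?t)" and aB1: "agr p q s (z$B1) (?t$B1)"
      and aA2: "agr p q s (z$A2) (a2R ?t)" and aB2: "agr p q s (z$B2) (?t$B2)"
      and aA3: "agr p q s (z$A3) (?t$A3)" and aB3: "agr p q s (z$B3) (?t$B3)"
      using zE ExA by simp_all
    have k1: "crp \<rho>1 \<sigma>1 \<sigma>1' (?t$B1) (?t$V3) \<noteq> 0" and k2: "crp \<rho>2 \<sigma>2 \<sigma>2' (?t$B2) (?t$V3) \<noteq> 0"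
      using tW0 unfolding W00_def by auto
    have i13: "ind2 (z$B1) (z$V3)"
      using k1 crp_rot_agr[OF r1 aB1 aV3] crp_ind2[of \<rho>1 \<sigma>1 \<sigma>1' "z$B1" "z$V3"] by simp
    have i1: "ind2 (z$A1) (z$B1)" and i2: "ind2 (z$A2) (z$B2)" and i3: "ind2 (z$A3) (z$B3)"
      using zU unfolding U_def by (auto intro: minor2_ind2)
    have V3in: "z$V3 \<in> sp2 (z$A1) (z$B1) \<and> z$V3 \<in> sp2 (z$A2) (z$B2)"
    proof -
      have "dt p q s (z$V3) (z$A1) (z$B1) = 0"
        using dt_cyc[of p q s "z$V3" "z$A1" "z$B1"] dt_agr[OF aA1 aB1 aV3] slv_dt_rows[OF r1 pqs k1]
        unfolding a1R_def by simp
      moreover have "dt p q s (z$V3) (z$A2) (z$B2) = 0"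
        using dt_cyc[of p q s "z$V3" "z$A2" "z$B2"] dt_agr[OF aA2 aB2 aV3] slv_dt_rows[OF r2 pqs k2]
        unfolding a2R_def by simp
      ultimately show ?thesis using K6[OF Cz pqs zS[of V3] zS[of A1] zS[of B1] i1] K6[OF Cz pqs zS[of V3] zS[of A2] zS[of B2] i2]
        by simp
    qed
    have N2: "agr p q s (crv p q s (a2R ?t) (?t$B2)) (crv p q s (z$A2) (z$B2))"
      by (rule crv_agr[OF agr_sym[OF aA2] agr_sym[OF aB2]])
    have N1: "agr p q s (crv p q s (a1R ?t) (?t$B1)) (crv p q s (z$A1) (z$B1))"
      by (rule crv_agr[OF agr_sym[OF aA1] agr_sym[OF aB1]])
    have N3: "agr p q s (crv p q s (?t$A3) (?t$B3)) (crv p q s (z$A3) (z$B3))"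
      by (rule crv_agr[OF agr_sym[OF aA3] agr_sym[OF aB3]])
    have Vin: "z$V1 \<in> sp2 (z$A2) (z$B2) \<and> z$V1 \<in> sp2 (z$A3) (z$B3) \<and>
               z$V2 \<in> sp2 (z$A1) (z$B1) \<and> z$V2 \<in> sp2 (z$A3) (z$B3)"
    proof -
      have "dt p q s (z$V1) (z$A2) (z$B2) = dot3 p q s (v1R ?t) (crv p q s (a2R ?t) (?t$B2))"
        using dt_dot[OF pqs] dot3_agr[OF agr_sym[OF aV1] N2] by simp
      also have "\<dots> = 0" unfolding v1R_def g1_def by (rule dot3_crv1[OF pqs])
      finally have d1: "dt p q s (z$V1) (z$A2) (z$B2) = 0" .
      have "dt p q s (z$V1) (z$A3) (z$B3) = dot3 p q s (v1R ?t) (crv p q s (?t$A3) (?t$B3))"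
        using dt_dot[OF pqs] dot3_agr[OF agr_sym[OF aV1] N3] by simp
      also have "\<dots> = 0" unfolding v1R_def g1_def by (rule dot3_crv2[OF pqs])
      finally have d2: "dt p q s (z$V1) (z$A3) (z$B3) = 0" .
      have "dt p q s (z$V2) (z$A1) (z$B1) = dot3 p q s (v2R ?t) (crv p q s (a1R ?t) (?t$B1))"
        using dt_dot[OF pqs] dot3_agr[OF agr_sym[OF aV2] N1] by simp
      also have "\<dots> = 0" unfolding v2R_def g2_def by (rule dot3_crv1[OF pqs])
      finally have d3: "dt p q s (z$V2) (z$A1) (z$B1) = 0" .
      have "dt p q s (z$V2) (z$A3) (z$B3) = dot3 p q s (v2R ?t) (crv p q s (?t$A3) (?t$B3))"
        using dt_dot[OF pqs] dot3_agr[OF agr_sym[OF aV2] N3] by simp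
      also have "\<dots> = 0" unfolding v2R_def g2_def by (rule dot3_crv2[OF pqs])
      finally have d4: "dt p q s (z$V2) (z$A3) (z$B3) = 0" .
      show ?thesis
        using K6[OF Cz pqs zS[of V1] zS[of A2] zS[of B2] i2 d1] K6[OF Cz pqs zS[of V1] zS[of A3] zS[of B3] i3 d2]
          K6[OF Cz pqs zS[of V2] zS[of A1] zS[of B1] i1 d3] K6[OF Cz pqs zS[of V2] zS[of A3] zS[of B3] i3 d4]
        by simp
    qed
    have nz: "z$V1 \<noteq> 0" "z$V2 \<noteq> 0" using zU unfolding U_def by auto
    show ?thesis unfolding Inc_def
      using nz ind2_nz[OF i13] i1 i2 i3 dt_nonzero_ind3[OF Cz] V3in Vin
        zS[of A1] zS[of B1] zS[of A2] zS[of B2] zS[of A3] zS[of B3]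
      by simp
  qed
  have yU: "y \<in> U"
  proof -
    let ?t = "piD D y"
    have tW0: "?t \<in> W00"
      using C0 Pc[of 9 y] Pc[of 10 y] Pc[of 11 y] c1 c2 crp_rot_agr[OF r1 Pfree[of B1 y] Pfree[of V3 y]]
        crp_rot_agr[OF r2 Pfree[of B2 y] Pfree[of V3 y]]
      unfolding W00_def by simp
    note rr = rec1[OF Iy tW0]
    have "agr p q s (g1 ?t) (crv p q s (crv p q s (y$A2) (y$B2)) (crv p q s (y$A3) (y$B3)))"
      unfolding g1_def by (intro crv_agr conjunct2[OF rr] Pfree) auto
    then have "g1 ?t $ e1 \<noteq> 0" using g1y e1 unfolding agr_def by auto
    moreover have "agr p q s (g2 ?t) (crv p q s (crv p q s (y$A1) (y$B1)) (crv p q s (y$A3) (y$B3)))"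
      unfolding g2_def by (intro crv_agr conjunct1[OF rr] Pfree) auto
    then have "g2 ?t $ e2 \<noteq> 0" using g2y e2 unfolding agr_def by auto
    ultimately show ?thesis using tW0 m1 m2 m3 v1e v2e unfolding U_def W0_def by blast
  qed
  have oU: "open U"
  proof -
    have Ueq: "U = {z \<in> {z \<in> {z \<in> {z \<in> {z \<in> {z. piD D z \<in> W0}. z$V1$e1 \<noteq> 0}. z$V2$e2 \<noteq> 0}.
                z$A1$k1 * z$B1$l1 - z$A1$l1 * z$B1$k1 \<noteq> 0}.
                z$A2$k2 * z$B2$l2 - z$A2$l2 * z$B2$k2 \<noteq> 0}. z$A3$k3 * z$B3$l3 - z$A3$l3 * z$B3$k3 \<noteq> 0}"
      unfolding U_def by blast
    have oa: "open {z \<in> {z. piD D z \<in> W0}. z$V1$e1 \<noteq> 0}"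
      by (rule open_nz[OF open_piD_vimage[OF oW0]]) simp
    have ob: "open {z \<in> {z \<in> {z. piD D z \<in> W0}. z$V1$e1 \<noteq> 0}. z$V2$e2 \<noteq> 0}"
      by (rule open_nz[OF oa]) simp
    show ?thesis unfolding Ueq by (rule open_minor_set[OF open_minor_set[OF open_minor_set[OF ob]]])
  qed
  show ?thesis
  proof (rule chart_lemma[of W0 R0 D U y SS])
    show "open W0" by (rule oW0)
    show "\<And>m r. hol W0 (\<lambda>t. R0 t $ m $ r)" by (rule hR0)
    show "\<And>t m r. t \<in> W0 \<Longrightarrow> (m, r) \<notin> D \<Longrightarrow> R0 t $ m $ r = t $ m $ r" by (rule agree)
    show "open U" by (rule oU)
    show "y \<in> U" by (rule yU)
    show "\<And>z. z \<in> U \<Longrightarrow> piD D z \<in> W0" unfolding U_def by blast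
    show "\<And>z. z \<in> U \<Longrightarrow> z \<in> SS \<longleftrightarrow> z = R0 (piD D z)"
    proof -
      fix z assume zU: "z \<in> U"
      then have tW: "piD D z \<in> W0" unfolding U_def by blast
      show "z \<in> SS \<longleftrightarrow> z = R0 (piD D z)"
        using F4[OF _ tW] F5[OF zU] SSI[of z] by blast
    qed
    show "y \<in> SS" by (rule y)
  qed
qed

lemma cscale_real: "cscale (of_real r) x = r *\<^sub>R x"
  by (simp add: vec_eq_iff cscale_def) (simp add: scaleR_conv_of_real)

lemma cs_scale: "csubspace T \<Longrightarrow> x \<in> T \<Longrightarrow> r *\<^sub>R x \<in> T"
  unfolding csubspace_def using cscale_real by metis
lemma cs_add: "csubspace T \<Longrightarrow> x \<in> T \<Longrightarrow> y \<in> T \<Longrightarrow> x + y \<in> T"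
  unfolding csubspace_def by blast
lemma cs_diff: "csubspace T \<Longrightarrow> x \<in> T \<Longrightarrow> y \<in> T \<Longrightarrow> x - y \<in> T"
  using cs_add[of T x "(-1) *\<^sub>R y"] cs_scale[of T y "-1"] by simp

lemma graph_tangent:
  fixes h :: "'n::finite frame \<Rightarrow> 'n frame"
  assumes U: "open U" "y \<in> U" and T: "csubspace T" "csubspace T'" "T \<inter> T' = {0}"
    and hT: "\<forall>t\<in>T \<inter> W. h t \<in> T'" and SU: "S \<inter> U = {t + h t |t. t \<in> T \<inter> W} \<inter> U"
    and t0: "t0 \<in> T" "t0 \<in> W" "y = t0 + h t0" and L: "(h has_derivative L) (at t0)"
    and line: "\<And>s::real. y + s *\<^sub>R u \<in> S"
  shows "\<exists>\<tau>\<in>T. u = \<tau> + L \<tau>"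
proof -
  obtain \<epsilon> where \<epsilon>: "\<epsilon> > 0" "ball y \<epsilon> \<subseteq> U" using U open_contains_ball by blast
  define \<delta> where "\<delta> = \<epsilon> / (norm u + 1)"
  have nu: "norm u + 1 > 0" by (simp add: add_nonneg_pos)
  have \<delta>: "\<delta> > 0" using \<epsilon> nu by (simp add: \<delta>_def)
  have inU: "y + s *\<^sub>R u \<in> U" if "\<bar>s\<bar> < \<delta>" for s
  proof -
    have "\<bar>s\<bar> * norm u \<le> \<bar>s\<bar> * (norm u + 1)" by (simp add: mult_left_mono)
    also have "\<dots> < \<delta> * (norm u + 1)" using that nu by (intro mult_strict_right_mono) auto
    also have "\<dots> = \<epsilon>" unfolding \<delta>_def using nu by simp
    finally have "dist y (y + s *\<^sub>R u) < \<epsilon>" by (simp add: dist_norm)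
    then show ?thesis using \<epsilon> by auto
  qed
  have ex: "\<exists>t. t \<in> T \<inter> W \<and> y + s *\<^sub>R u = t + h t" if "\<bar>s\<bar> < \<delta>" for s
    using inU[OF that] line[of s] SU by blast
  define ts where "ts s = (SOME t. t \<in> T \<inter> W \<and> y + s *\<^sub>R u = t + h t)" for s
  have ts: "ts s \<in> T \<inter> W \<and> y + s *\<^sub>R u = ts s + h (ts s)" if "\<bar>s\<bar> < \<delta>" for s
    unfolding ts_def using someI_ex[OF ex[OF that]] .
  have hT0: "h t0 \<in> T'" using hT t0 by blast
  define dec where "dec s = (1/s) *\<^sub>R (ts s - t0)" for s
  have dec: "dec s \<in> T \<and> u - dec s \<in> T'" if "\<bar>s\<bar> < \<delta>" "s \<noteq> 0" for s
  proof -
    have a: "dec s \<in> T" unfolding dec_def using ts[OF that(1)] t0 T by (auto intro: cs_scale cs_diff)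
    have "u - dec s = (1/s) *\<^sub>R (h (ts s) - h t0)"
    proof -
      have "s *\<^sub>R u = (ts s - t0) + (h (ts s) - h t0)" using ts[OF that(1)] t0(3) by (simp add: algebra_simps)
      then have "(1/s) *\<^sub>R (s *\<^sub>R u) = (1/s) *\<^sub>R ((ts s - t0) + (h (ts s) - h t0))" by simp
      then have "u = (1/s) *\<^sub>R ((ts s - t0) + (h (ts s) - h t0))" using that(2) by simp
      then show ?thesis unfolding dec_def by (simp add: algebra_simps)
    qed
    moreover have "h (ts s) \<in> T'" using hT ts[OF that(1)] by blast
    ultimately have "u - dec s \<in> T'" using hT0 T by (auto intro: cs_scale cs_diff)
    then show ?thesis using a by blast
  qed
  define s0 where "s0 = \<delta> / 2"
  have s0: "\<bar>s0\<bar> < \<delta>" "s0 \<noteq> 0" using \<delta> by (auto simp: s0_def)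
  define \<tau> where "\<tau> = dec s0"
  have \<tau>T: "\<tau> \<in> T" using dec[OF s0] unfolding \<tau>_def by blast
  have const: "dec s = \<tau>" if "\<bar>s\<bar> < \<delta>" "s \<noteq> 0" for s
  proof -
    have A: "dec s - \<tau> \<in> T" using dec[OF that] \<tau>T T by (auto intro: cs_diff)
    have e: "dec s - \<tau> = (u - \<tau>) - (u - dec s)" by simp
    have "(u - \<tau>) - (u - dec s) \<in> T'"
      by (rule cs_diff[OF T(2)]) (use dec[OF that] dec[OF s0] in \<open>auto simp: \<tau>_def\<close>)
    then have B: "dec s - \<tau> \<in> T'" by (simp only: e)
    have "dec s - \<tau> \<in> T \<inter> T'" using A B by blast
    then have "dec s - \<tau> = 0" using T(3) by blast
    then show ?thesis by simp
  qed
  have heq: "h (t0 + s *\<^sub>R \<tau>) = h t0 + s *\<^sub>R (u - \<tau>)" if "s \<in> ball 0 \<delta>" for s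
  proof (cases "s = 0")
    case True then show ?thesis by simp
  next
    case False
    have ss: "\<bar>s\<bar> < \<delta>" using that by simp
    have "(1/s) *\<^sub>R (ts s - t0) = \<tau>" using const[OF ss False] unfolding dec_def .
    then have "s *\<^sub>R ((1/s) *\<^sub>R (ts s - t0)) = s *\<^sub>R \<tau>" by simp
    then have "ts s - t0 = s *\<^sub>R \<tau>" using False by simp
    then have "ts s = t0 + s *\<^sub>R \<tau>" by (simp add: algebra_simps)
    moreover have "y + s *\<^sub>R u = ts s + h (ts s)" using ts[OF ss] by blast
    ultimately show ?thesis using t0(3) by (simp add: algebra_simps)
  qed
  have bl: "bounded_linear L" using L has_derivative_bounded_linear by blast
  have d1: "((\<lambda>s. h (t0 + s *\<^sub>R \<tau>)) has_vector_derivative L \<tau>) (at 0)"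
  proof -
    have a: "((\<lambda>s::real. t0 + s *\<^sub>R \<tau>) has_derivative (\<lambda>s. s *\<^sub>R \<tau>)) (at 0)"
      by (auto intro!: derivative_eq_intros)
    have b: "(h has_derivative L) (at ((\<lambda>s::real. t0 + s *\<^sub>R \<tau>) 0))" using L by simp
    have "((h \<circ> (\<lambda>s. t0 + s *\<^sub>R \<tau>)) has_derivative (L \<circ> (\<lambda>s. s *\<^sub>R \<tau>))) (at 0)"
      by (rule diff_chain_at[OF a b])
    moreover have "(L \<circ> (\<lambda>s. s *\<^sub>R \<tau>)) = (\<lambda>s. s *\<^sub>R L \<tau>)"
      using linear_scale[OF bounded_linear.linear[OF bl]] by (auto simp: fun_eq_iff)
    ultimately show ?thesis unfolding has_vector_derivative_def by (simp add: o_def)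
  qed
  have d2: "((\<lambda>s. h t0 + s *\<^sub>R (u - \<tau>)) has_vector_derivative (u - \<tau>)) (at 0)"
    by (auto intro!: derivative_eq_intros)
  have "((\<lambda>s. h (t0 + s *\<^sub>R \<tau>)) has_vector_derivative (u - \<tau>)) (at 0)"
    by (rule has_vector_derivative_transform_within_open[OF d2, of "ball 0 \<delta>"]) (use \<delta> heq in auto)
  then have "L \<tau> = u - \<tau>" using vector_derivative_unique_at[OF d1] by blast
  then show ?thesis using \<tau>T by (intro bexI[of _ \<tau>]) auto
qed

lemma graph_curve:
  fixes h :: "'n::finite frame \<Rightarrow> 'n frame"
  assumes U: "open U" "y \<in> U" and W: "open W" and T: "csubspace T"
    and SU: "S \<inter> U = {t + h t |t. t \<in> T \<inter> W} \<inter> U"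
    and t0: "t0 \<in> T" "t0 \<in> W" "y = t0 + h t0" and L: "(h has_derivative L) (at t0)"
    and \<tau>: "\<tau> \<in> T"
  shows "((\<lambda>s::real. (t0 + s *\<^sub>R \<tau>) + h (t0 + s *\<^sub>R \<tau>)) has_vector_derivative (\<tau> + L \<tau>)) (at 0)"
    and "\<exists>\<delta>>0. \<forall>s. \<bar>s\<bar> < \<delta> \<longrightarrow> (t0 + s *\<^sub>R \<tau>) + h (t0 + s *\<^sub>R \<tau>) \<in> S"
proof -
  have bl: "bounded_linear L" using L has_derivative_bounded_linear by blast
  have a: "((\<lambda>s::real. t0 + s *\<^sub>R \<tau>) has_derivative (\<lambda>s. s *\<^sub>R \<tau>)) (at 0)"
    by (auto intro!: derivative_eq_intros)
  have b: "(h has_derivative L) (at ((\<lambda>s::real. t0 + s *\<^sub>R \<tau>) 0))" using L by simp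
  have "((h \<circ> (\<lambda>s. t0 + s *\<^sub>R \<tau>)) has_derivative (L \<circ> (\<lambda>s. s *\<^sub>R \<tau>))) (at 0)"
    by (rule diff_chain_at[OF a b])
  moreover have "(L \<circ> (\<lambda>s. s *\<^sub>R \<tau>)) = (\<lambda>s. s *\<^sub>R L \<tau>)"
    using linear_scale[OF bounded_linear.linear[OF bl]] by (auto simp: fun_eq_iff)
  ultimately have d1: "((\<lambda>s. h (t0 + s *\<^sub>R \<tau>)) has_vector_derivative L \<tau>) (at 0)"
    unfolding has_vector_derivative_def by (simp add: o_def)
  have d0: "((\<lambda>s::real. t0 + s *\<^sub>R \<tau>) has_vector_derivative \<tau>) (at 0)"
    by (auto intro!: derivative_eq_intros)
  show D: "((\<lambda>s::real. (t0 + s *\<^sub>R \<tau>) + h (t0 + s *\<^sub>R \<tau>)) has_vector_derivative (\<tau> + L \<tau>)) (at 0)"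
    using has_vector_derivative_add[OF d0 d1] .
  have cont: "isCont (\<lambda>s::real. (t0 + s *\<^sub>R \<tau>) + h (t0 + s *\<^sub>R \<tau>)) 0"
    using has_vector_derivative_continuous[OF D] .
  obtain \<epsilon> where \<epsilon>: "\<epsilon> > 0" "ball y \<epsilon> \<subseteq> U" using U open_contains_ball by blast
  obtain \<delta>1 where \<delta>1: "\<delta>1 > 0" "\<And>s. dist s 0 < \<delta>1 \<Longrightarrow> dist ((t0 + s *\<^sub>R \<tau>) + h (t0 + s *\<^sub>R \<tau>)) y < \<epsilon>"
    using cont[unfolded continuous_at_eps_delta] \<epsilon> t0(3) by force
  have cont2: "isCont (\<lambda>s::real. t0 + s *\<^sub>R \<tau>) 0" by (intro continuous_intros)
  obtain \<epsilon>2 where \<epsilon>2: "\<epsilon>2 > 0" "ball t0 \<epsilon>2 \<subseteq> W" using W t0 open_contains_ball by blast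
  obtain \<delta>2 where \<delta>2: "\<delta>2 > 0" "\<And>s. dist s 0 < \<delta>2 \<Longrightarrow> dist (t0 + s *\<^sub>R \<tau>) t0 < \<epsilon>2"
    using cont2[unfolded continuous_at_eps_delta] \<epsilon>2 by force
  show "\<exists>\<delta>>0. \<forall>s. \<bar>s\<bar> < \<delta> \<longrightarrow> (t0 + s *\<^sub>R \<tau>) + h (t0 + s *\<^sub>R \<tau>) \<in> S"
  proof (intro exI[of _ "min \<delta>1 \<delta>2"] conjI allI impI)
    show "0 < min \<delta>1 \<delta>2" using \<delta>1 \<delta>2 by simp
    fix s :: real assume s: "\<bar>s\<bar> < min \<delta>1 \<delta>2"
    have inU: "(t0 + s *\<^sub>R \<tau>) + h (t0 + s *\<^sub>R \<tau>) \<in> U"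
      using \<delta>1(2)[of s] s \<epsilon>(2) by (auto simp: dist_commute)
    have inW: "t0 + s *\<^sub>R \<tau> \<in> W"
      using \<delta>2(2)[of s] s \<epsilon>2(2) by (auto simp: dist_commute)
    have inT: "t0 + s *\<^sub>R \<tau> \<in> T" using t0 \<tau> T by (auto intro: cs_add cs_scale)
    show "(t0 + s *\<^sub>R \<tau>) + h (t0 + s *\<^sub>R \<tau>) \<in> S" using SU inU inW inT by blast
  qed
qed

lemma quad_obstruction:
  fixes \<gamma> :: "real \<Rightarrow> 'a::real_normed_vector" and G Q K :: "'a \<Rightarrow> complex"
  assumes g: "(\<gamma> has_vector_derivative v0) (at 0)" and g0: "\<gamma> 0 = y"
    and van: "\<exists>\<delta>>0. \<forall>s. \<bar>s\<bar> < \<delta> \<longrightarrow> G (\<gamma> s) = 0"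
    and exp: "\<And>d. G (y + d) = Q d + K d"
    and hQ: "\<And>r d. Q (r *\<^sub>R d) = (of_real r)^2 * Q d" and hK: "\<And>r d. K (r *\<^sub>R d) = (of_real r)^3 * K d"
    and cQ: "continuous_on UNIV Q" and cK: "continuous_on UNIV K"
    and Qv: "Q v0 \<noteq> 0"
  shows False
proof -
  define \<phi> where "\<phi> s = (1/s) *\<^sub>R (\<gamma> s - y)" for s
  have "((\<lambda>h. norm (\<gamma> (0 + h) - \<gamma> 0 - h *\<^sub>R v0) / norm h) \<longlongrightarrow> 0) (at 0)"
    using g unfolding has_vector_derivative_def has_derivative_at by blast
  moreover have "\<forall>\<^sub>F h in at (0::real). norm (\<gamma> (0 + h) - \<gamma> 0 - h *\<^sub>R v0) / norm h = norm (\<phi> h - v0)"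
  proof (rule eventually_at_filter[THEN iffD2], rule always_eventually, intro allI impI)
    fix h :: real assume "h \<noteq> 0"
    then have "\<phi> h - v0 = (1/h) *\<^sub>R (\<gamma> h - y - h *\<^sub>R v0)" unfolding \<phi>_def by (simp add: algebra_simps)
    then show "norm (\<gamma> (0 + h) - \<gamma> 0 - h *\<^sub>R v0) / norm h = norm (\<phi> h - v0)" using g0 by (simp add: divide_inverse_commute)
  qed
  ultimately have "((\<lambda>h. norm (\<phi> h - v0)) \<longlongrightarrow> 0) (at 0)" by (rule Lim_transform_eventually)
  then have "((\<lambda>h. \<phi> h - v0) \<longlongrightarrow> 0) (at 0)" by (simp add: tendsto_norm_zero_iff)
  then have phi: "(\<phi> \<longlongrightarrow> v0) (at 0)" by (simp add: LIM_zero_cancel)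
  have "((\<lambda>s. Q (\<phi> s) + of_real s * K (\<phi> s)) \<longlongrightarrow> Q v0 + of_real 0 * K v0) (at 0)"
    using cQ cK phi
    by (intro tendsto_intros) (auto simp: continuous_on_def intro: tendsto_compose[OF _ phi] isCont_tendsto_compose continuous_on_interior)
  then have lim: "((\<lambda>s. Q (\<phi> s) + of_real s * K (\<phi> s)) \<longlongrightarrow> Q v0) (at 0)" by simp
  obtain \<delta> where \<delta>: "\<delta> > 0" "\<And>s. \<bar>s\<bar> < \<delta> \<Longrightarrow> G (\<gamma> s) = 0" using van by blast
  have "\<forall>\<^sub>F s in at (0::real). Q (\<phi> s) + of_real s * K (\<phi> s) = 0"
  proof -
    have "\<forall>\<^sub>F s in at (0::real). s \<noteq> 0 \<and> \<bar>s\<bar> < \<delta>"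
      using \<delta>(1) by (auto simp: eventually_at intro!: exI[of _ \<delta>])
    then show ?thesis
    proof (rule eventually_mono)
      fix s :: real assume s: "s \<noteq> 0 \<and> \<bar>s\<bar> < \<delta>"
      have "0 = G (y + (\<gamma> s - y))" using \<delta>(2)[of s] s by simp
      also have "\<dots> = Q (\<gamma> s - y) + K (\<gamma> s - y)" by (rule exp)
      also have "\<gamma> s - y = s *\<^sub>R \<phi> s" unfolding \<phi>_def using s by simp
      finally have "0 = (of_real s)^2 * Q (\<phi> s) + (of_real s)^3 * K (\<phi> s)" using hQ hK by simp
      then have "0 = (of_real s)^2 * (Q (\<phi> s) + of_real s * K (\<phi> s))" by (simp add: algebra_simps power2_eq_square power3_eq_cube)
      then show "Q (\<phi> s) + of_real s * K (\<phi> s) = 0" using s by simp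
    qed
  qed
  then have "((\<lambda>s. Q (\<phi> s) + of_real s * K (\<phi> s)) \<longlongrightarrow> 0) (at 0)" by (rule tendsto_eventually)
  with lim have "Q v0 = 0" using tendsto_unique[OF at_neq_bot] by blast
  then show False using Qv by simp
qed

lemma dt_zero1[simp]: "dt p q s 0 y z = 0" and dt_zero2[simp]: "dt p q s x 0 z = 0" and dt_zero3[simp]: "dt p q s x y 0 = 0"
  by (simp_all add: dt_def crp_def)

lemma dt_scale1: "dt p q s (k *s x) y z = k * dt p q s x y z"
  and dt_scale2: "dt p q s x (k *s y) z = k * dt p q s x y z"
  and dt_scale3: "dt p q s x y (k *s z) = k * dt p q s x y z"
  by (simp_all add: dt_def crp_def algebra_simps)

lemma dt_swap23: "dt p q s x y z = - dt p q s x z y"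
  unfolding dt_def crp_def by (simp add: algebra_simps)

lemma dt_expand:
  "dt p q s (x + dx) (a + da) (b + db) = dt p q s x a b + (dt p q s dx a b + dt p q s x da b + dt p q s x a db)
     + (dt p q s dx da b + dt p q s dx a db + dt p q s x da db) + dt p q s dx da db"
  unfolding dt_def crp_def by (simp add: algebra_simps)

lemma scaleR_cvec: "r *\<^sub>R (x::complex^'n::finite) = of_real r *s x"
  by (simp add: vec_eq_iff) (simp add: scaleR_conv_of_real)

lemma mu_lemma:
  assumes "a' \<in> sp2 a b" "b' \<in> sp2 a b" "ind2 a' b'"
  obtains \<mu> where "\<mu> \<noteq> 0" "\<And>p q s x. dt p q s x a' b' = \<mu> * dt p q s x a b"
proof -
  obtain p q where a: "a' = p *s a + q *s b" using assms(1) by (auto simp: sp2_iff)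
  obtain r t where b: "b' = r *s a + t *s b" using assms(2) by (auto simp: sp2_iff)
  have i: "\<And>\<alpha> \<beta>. \<alpha> *s a' + \<beta> *s b' = 0 \<Longrightarrow> \<alpha> = 0 \<and> \<beta> = 0" using assms(3) unfolding ind2_def by blast
  have "p*t - q*r \<noteq> 0"
  proof
    assume d0: "p*t - q*r = 0"
    have "t = 0 \<and> - q = 0"
      by (rule i) (use d0 in \<open>simp add: a b vec_eq_iff algebra_simps\<close>)
    moreover have "r = 0 \<and> - p = 0"
      by (rule i) (use d0 in \<open>simp add: a b vec_eq_iff algebra_simps\<close>)
    ultimately have "1 *s a' + 0 *s b' = 0" using a by simp
    then show False using i by fastforce
  qed
  moreover have "dt p' q' s' x a' b' = (p*t - q*r) * dt p' q' s' x a b" for p' q' s' x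
    unfolding a b dt_def crp_def by (simp add: algebra_simps)
  ultimately show ?thesis using that by blast
qed


lemma ind3_ind2: "ind3 x a b \<Longrightarrow> ind2 a b"
  unfolding ind3_def ind2_def by (metis add_0 vector_smult_lzero)

lemma holv_const[simp]: "holv W (\<lambda>t. c)" unfolding holv_def by simp

lemma singular:
  fixes y :: "'n::finite frame"
  assumes yS: "y \<in> SS" and e01: "vec.span {y$0} = vec.span {y$1}" and e12: "vec.span {y$1} = vec.span {y$2}"
    and l12: "sp2 (y$3) (y$4) = sp2 (y$5) (y$6)" and l23: "sp2 (y$5) (y$6) = sp2 (y$7) (y$8)"
  shows "\<not> complex_submanifold_at SS y"
proof
  assume sub: "complex_submanifold_at SS y"
  have Iy: "Inc 0 1 2 3 4 5 6 7 8 y" using yS SS_Inc by blast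
  define v where "v = y$0"
  have v0: "v \<noteq> 0" using Iy unfolding Inc_def v_def by simp
  obtain lam2 where la2: "y$1 = lam2 *s v"
  proof -
    have "y$1 \<in> vec.span {y$0}" using e01 vec.span_base[of "y$1" "{y$1}"] by auto
    then show ?thesis using that unfolding v_def sp1_iff by blast
  qed
  obtain lam3 where la3: "y$2 = lam3 *s v"
  proof -
    have "y$2 \<in> vec.span {y$0}" using e01 e12 vec.span_base[of "y$2" "{y$2}"] by auto
    then show ?thesis using that unfolding v_def sp1_iff by blast
  qed
  have l2nz: "lam2 \<noteq> 0" "lam3 \<noteq> 0" using Iy la2 la3 unfolding Inc_def by auto
  have l: "y$m \<in> sp2 (y$3) (y$4)" if "m = 5 \<or> m = 6 \<or> m = 7 \<or> m = 8" for m :: 12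
    using that l12 l23 vec.span_base[of "y$m"] by auto
  obtain \<mu>2 where mu2: "\<mu>2 \<noteq> 0" "\<And>p q s x. dt p q s x (y$5) (y$6) = \<mu>2 * dt p q s x (y$3) (y$4)"
    using mu_lemma[OF l[of 5] l[of 6]] Iy unfolding Inc_def by auto
  obtain \<mu>3 where mu3: "\<mu>3 \<noteq> 0" "\<And>p q s x. dt p q s x (y$7) (y$8) = \<mu>3 * dt p q s x (y$3) (y$4)"
    using mu_lemma[OF l[of 7] l[of 8]] Iy unfolding Inc_def by auto
  obtain \<alpha>2 \<beta>2 where ab2: "v = \<alpha>2 *s y$5 + \<beta>2 *s y$6" using Iy unfolding Inc_def sp2_iff v_def by blast
  have vl: "v \<in> sp2 (y$3) (y$4)" using Iy l12 unfolding Inc_def v_def by auto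
  obtain \<alpha> \<beta> where ab: "v = \<alpha> *s y$3 + \<beta> *s y$4" using vl unfolding sp2_iff by blast
  define e where "e = (if \<beta> \<noteq> 0 then y$3 else y$4)"
  have i34: "ind2 (y$3) (y$4)" using Iy unfolding Inc_def by simp
  have eind: "ind2 e v"
    unfolding ind2_def
  proof (intro allI impI)
    fix x z assume H: "x *s e + z *s v = 0"
    show "x = 0 \<and> z = 0"
    proof (cases "\<beta> \<noteq> 0")
      case True
      then have "(x + z * \<alpha>) *s y$3 + (z * \<beta>) *s y$4 = 0" using H unfolding e_def ab by (simp add: algebra_simps vec_eq_iff)
      then have "x + z * \<alpha> = 0 \<and> z * \<beta> = 0" using i34 unfolding ind2_def by blast
      then show ?thesis using True by auto
    next
      case False
      then have "\<alpha> \<noteq> 0" using v0 ab by auto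
      have "(z * \<alpha>) *s y$3 + x *s y$4 = 0" using H False unfolding e_def ab by (simp add: algebra_simps vec_eq_iff)
      then have "z * \<alpha> = 0 \<and> x = 0" using i34 unfolding ind2_def by blast
      then show ?thesis using \<open>\<alpha> \<noteq> 0\<close> by auto
    qed
  qed
  have i3c: "ind3 (y$9) (y$10) (y$11)" using Iy unfolding Inc_def by simp
  obtain d where dC: "d \<in> {y$9, y$10, y$11}" and dn: "d \<notin> sp2 e v"
  proof (rule ccontr)
    assume "\<not> thesis"
    then have "{y$9, y$10, y$11} \<subseteq> sp2 e v" using that by blast
    then have "card {y$9, y$10, y$11} \<le> card {e, v}"
      using vec.independent_span_bound[of "{e, v}" "{y$9, y$10, y$11}"] i3c unfolding ind3_iff by auto
    also have "\<dots> \<le> 2" by (simp add: card_insert_le_m1)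
    finally show False using i3c unfolding ind3_iff by simp
  qed
  have edv: "ind3 e d v"
    unfolding ind3_def
  proof (intro allI impI)
    fix x z w assume H: "x *s e + z *s d + w *s v = 0"
    have "z = 0"
    proof (rule ccontr)
      assume "z \<noteq> 0"
      then have "d = (- x / z) *s e + (- w / z) *s v" using H by (simp add: vec_eq_iff field_simps) (metis add.commute add_eq_0_iff vector_add_component vector_smult_component zero_index H)
      then show False using dn unfolding sp2_iff by blast
    qed
    then have "x *s e + w *s v = 0" using H by simp
    then show "x = 0 \<and> z = 0 \<and> w = 0" using eind \<open>z = 0\<close> unfolding ind2_def by blast
  qed
  obtain p q s where D0: "dt p q s e d v \<noteq> 0" using ind3_minor[OF edv] by blast
  have pqs: "p \<noteq> q" "p \<noteq> s" "q \<noteq> s" using dt_distinct[OF D0] by auto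
  have eL: "e \<in> sp2 (y$3) (y$4)" unfolding e_def by (auto intro: vec.span_base)
  have dP: "d \<in> sp3 (y$9) (y$10) (y$11)" using dC by (auto intro: vec.span_base)
  have Dd: "dt p q s d (y$3) (y$4) \<noteq> 0"
  proof (cases "\<beta> \<noteq> 0")
    case True
    have "dt p q s e d v = \<beta> * dt p q s (y$3) d (y$4)"
      unfolding ab e_def using True dt_lin2_3[of p q s "y$3" d \<alpha> "y$3" \<beta> "y$4"] by (simp add: dt_same13)
    then show ?thesis using D0 dt_swap[of p q s d "y$3" "y$4"] by auto
  next
    case False
    have "dt p q s e d v = \<alpha> * dt p q s (y$4) d (y$3)"
      unfolding ab e_def using False dt_scale3 by simp
    then show ?thesis using D0 dt_cyc[of p q s "y$4" d "y$3"] by auto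
  qed
  define u :: "'n frame" where "u = (\<chi> m. if m = 0 then e else 0)"
  define w :: "'n frame" where "w = (\<chi> m. if m = 5 then \<beta>2 *s d else if m = 6 then (-\<alpha>2) *s d else 0)"
  have lineu: "y + r *\<^sub>R u \<in> SS" for r :: real
  proof -
    let ?z = "y + r *\<^sub>R u"
    have zc: "?z $ m = (if m = 0 then v + of_real r *s e else y $ m)" for m unfolding u_def v_def by (simp add: scaleR_cvec)
    have nz: "v + of_real r *s e \<noteq> 0"
    proof
      assume "v + of_real r *s e = 0"
      then have "dt p q s e d (v + of_real r *s e) = 0" by simp
      moreover have "dt p q s e d (v + of_real r *s e) = dt p q s e d v"
        using dt_lin2_3[of p q s e d 1 v "of_real r" e] by (simp add: dt_same13)
      ultimately show False using D0 by simp
    qed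
    have inl: "v + of_real r *s e \<in> sp2 (y$3) (y$4)" using vl eL by (simp add: vec.span_add vec.span_scale)
    show ?thesis unfolding SS_Inc Inc_def zc using Iy nz inl l12 l23 unfolding Inc_def v_def by auto
  qed
  have linew: "y + r *\<^sub>R w \<in> SS" for r :: real
  proof -
    let ?z = "y + r *\<^sub>R w"
    let ?k = "of_real r :: complex"
    define a' where "a' = y$5 + (?k * \<beta>2) *s d"
    define b' where "b' = y$6 + (- ?k * \<alpha>2) *s d"
    have zc: "?z $ m = (if m = 5 then a' else if m = 6 then b' else y $ m)" for m
      unfolding w_def a'_def b'_def by (simp add: scaleR_cvec)
    have "dt p q s d a' b' = dt p q s d (y$5) (y$6)"
      unfolding a'_def b'_def dt_def crp_def by (simp add: algebra_simps)
    also have "\<dots> = \<mu>2 * dt p q s d (y$3) (y$4)" by (rule mu2(2))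
    finally have "dt p q s d a' b' \<noteq> 0" using mu2(1) Dd by simp
    then have iab: "ind2 a' b'" using dt_nonzero_ind3 ind3_ind2 by blast
    have va: "v = \<alpha>2 *s a' + \<beta>2 *s b'" unfolding a'_def b'_def using ab2 by (simp add: vec_eq_iff algebra_simps)
    have v1: "y$0 \<in> sp2 a' b'" using va unfolding sp2_iff v_def by blast
    have "y$2 = (lam3*\<alpha>2) *s a' + (lam3*\<beta>2) *s b'" using la3 va by (simp add: vec_eq_iff algebra_simps)
    then have v3: "y$2 \<in> sp2 a' b'" unfolding sp2_iff by blast
    have aP: "a' \<in> sp3 (y$9) (y$10) (y$11)" "b' \<in> sp3 (y$9) (y$10) (y$11)"
      unfolding a'_def b'_def using Iy dP unfolding Inc_def by (simp_all add: vec.span_add vec.span_diff vec.span_scale)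
    show ?thesis unfolding SS_Inc Inc_def zc using Iy iab v1 v3 aP unfolding Inc_def by auto
  qed
  define dd where "dd x a b = dt p q s x a b" for x a b
  define c12 where "c12 = 1 / \<mu>2"
  define c13 where "c13 = - 1 / \<mu>3"
  define c21 where "c21 = - 1 / lam2"
  define c23 where "c23 = 1 / (lam2 * \<mu>3)"
  define c31 where "c31 = 1 / lam3"
  define c32 where "c32 = - 1 / (lam3 * \<mu>2)"
  define G where "G z = c12 * dd (z$0) (z$5) (z$6) + c13 * dd (z$0) (z$7) (z$8) + c21 * dd (z$1) (z$3) (z$4)
     + c23 * dd (z$1) (z$7) (z$8) + c31 * dd (z$2) (z$3) (z$4) + c32 * dd (z$2) (z$5) (z$6)" for z :: "'n frame"
  define LL where "LL x a b dx da db = dd dx a b + dd x da b + dd x a db" for x a b dx da db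
  define QQ where "QQ x a b dx da db = dd dx da b + dd dx a db + dd x da db" for x a b dx da db
  define Lsum where "Lsum z = c12 * LL (y$0) (y$5) (y$6) (z$0) (z$5) (z$6) + c13 * LL (y$0) (y$7) (y$8) (z$0) (z$7) (z$8)
     + c21 * LL (y$1) (y$3) (y$4) (z$1) (z$3) (z$4) + c23 * LL (y$1) (y$7) (y$8) (z$1) (z$7) (z$8)
     + c31 * LL (y$2) (y$3) (y$4) (z$2) (z$3) (z$4) + c32 * LL (y$2) (y$5) (y$6) (z$2) (z$5) (z$6)" for z :: "'n frame"
  define Q where "Q z = c12 * QQ (y$0) (y$5) (y$6) (z$0) (z$5) (z$6) + c13 * QQ (y$0) (y$7) (y$8) (z$0) (z$7) (z$8)
     + c21 * QQ (y$1) (y$3) (y$4) (z$1) (z$3) (z$4) + c23 * QQ (y$1) (y$7) (y$8) (z$1) (z$7) (z$8)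
     + c31 * QQ (y$2) (y$3) (y$4) (z$2) (z$3) (z$4) + c32 * QQ (y$2) (y$5) (y$6) (z$2) (z$5) (z$6)" for z :: "'n frame"
  define K where "K z = c12 * dd (z$0) (z$5) (z$6) + c13 * dd (z$0) (z$7) (z$8) + c21 * dd (z$1) (z$3) (z$4)
     + c23 * dd (z$1) (z$7) (z$8) + c31 * dd (z$2) (z$3) (z$4) + c32 * dd (z$2) (z$5) (z$6)" for z :: "'n frame"
  have G0: "G z = 0" if "z \<in> SS" for z
  proof -
    have "Inc 0 1 2 3 4 5 6 7 8 z" using that SS_Inc by blast
    then show ?thesis unfolding G_def dd_def Inc_def by (simp add: dt_in_sp2)
  qed
  have Lsum0: "Lsum z = 0" for z
  proof -
    have m2: "dd x (y$5) (y$6) = \<mu>2 * dd x (y$3) (y$4)" and m3: "dd x (y$7) (y$8) = \<mu>3 * dd x (y$3) (y$4)" for x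
      unfolding dd_def using mu2(2) mu3(2) by auto
    have sc: "dd (k *s x) a b = k * dd x a b" for k x a b unfolding dd_def by (rule dt_scale1)
    show ?thesis unfolding Lsum_def LL_def m2 m3 la2 la3 sc v_def[symmetric]
      unfolding c12_def c13_def c21_def c23_def c31_def c32_def
      using mu2(1) mu3(1) l2nz by (simp add: field_simps)
  qed
  have exp: "G (y + z) = Q z + K z" for z
  proof -
    have "G (y + z) = G y + Lsum z + Q z + K z"
      unfolding G_def Lsum_def Q_def K_def LL_def QQ_def dd_def vector_add_component dt_expand
      by (simp add: algebra_simps)
    then show ?thesis using G0[OF yS] Lsum0[of z] by simp
  qed
  have sc1: "(r *\<^sub>R z) $ m = of_real r *s (z $ m)" for r and z :: "'n frame" and m by (simp add: scaleR_cvec)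
  have hQ: "Q (r *\<^sub>R z) = (of_real r)^2 * Q z" for r z
    unfolding Q_def QQ_def dd_def sc1 dt_scale1 dt_scale2 dt_scale3 by (simp add: algebra_simps power2_eq_square)
  have hK: "K (r *\<^sub>R z) = (of_real r)^3 * K z" for r z
    unfolding K_def dd_def sc1 dt_scale1 dt_scale2 dt_scale3 by (simp add: algebra_simps power3_eq_cube)
  have cQ: "continuous_on UNIV Q"
  proof (rule hol_cont)
    show "hol UNIV Q" unfolding Q_def QQ_def dd_def
      by (intro hol_add hol_mult hol_const hol_dt holv_coord holv_const)
  qed
  have cK: "continuous_on UNIV K"
  proof (rule hol_cont)
    show "hol UNIV K" unfolding K_def dd_def
      by (intro hol_add hol_mult hol_const hol_dt holv_coord holv_const)
  qed
  have Qv: "Q (u + w) \<noteq> 0"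
  proof -
    have uw: "(u + w) $ m = (if m = 0 then e else if m = 5 then \<beta>2 *s d else if m = 6 then (-\<alpha>2) *s d else 0)" for m
      unfolding u_def w_def by simp
    have "Q (u + w) = c12 * (dd e (\<beta>2 *s d) (y$6) + dd e (y$5) ((-\<alpha>2) *s d) + dd (y$0) (\<beta>2 *s d) ((-\<alpha>2) *s d))
        + c32 * dd (y$2) (\<beta>2 *s d) ((-\<alpha>2) *s d)"
      unfolding Q_def QQ_def uw dd_def by simp
    also have "\<dots> = c12 * dt p q s e d v"
    proof -
      have "dt p q s e d v = \<alpha>2 * dt p q s e d (y$5) + \<beta>2 * dt p q s e d (y$6)"
        unfolding ab2 by (rule dt_lin2_3)
      moreover have "dt p q s e (y$5) d = - dt p q s e d (y$5)" by (rule dt_swap23)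
      ultimately show ?thesis unfolding dd_def dt_scale2 dt_scale3 by (simp add: dt_same23 algebra_simps)
    qed
    finally show ?thesis using D0 mu2(1) unfolding c12_def by simp
  qed
  obtain U W T T' h where sm: "open U" "y \<in> U" "open W" "csubspace T" "csubspace T'" "T \<inter> T' = {0}"
    "holomorphic_map_on h W" "\<forall>t\<in>T \<inter> W. h t \<in> T'" "SS \<inter> U = {t + h t |t. t \<in> T \<inter> W} \<inter> U"
    using sub unfolding complex_submanifold_at_def by blast
  obtain t0 where t0: "t0 \<in> T" "t0 \<in> W" "y = t0 + h t0" using sm(2,9) yS by blast
  obtain Ld where Ld: "(h has_derivative Ld) (at t0)" using sm(7) t0(2) unfolding holomorphic_map_on_def by blast
  obtain \<tau>u where \<tau>u: "\<tau>u \<in> T" "u = \<tau>u + Ld \<tau>u"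
    using graph_tangent[OF sm(1,2,4,5,6,8,9) t0 Ld lineu] by blast
  obtain \<tau>w where \<tau>w: "\<tau>w \<in> T" "w = \<tau>w + Ld \<tau>w"
    using graph_tangent[OF sm(1,2,4,5,6,8,9) t0 Ld linew] by blast
  have bl: "bounded_linear Ld" using Ld has_derivative_bounded_linear by blast
  define \<tau> where "\<tau> = \<tau>u + \<tau>w"
  have \<tau>T: "\<tau> \<in> T" unfolding \<tau>_def using \<tau>u \<tau>w sm(4) by (rule_tac cs_add) auto
  have uw: "u + w = \<tau> + Ld \<tau>"
    unfolding \<tau>_def using \<tau>u(2) \<tau>w(2) linear_add[OF bounded_linear.linear[OF bl]] by (simp add: algebra_simps)
  note gc = graph_curve[OF sm(1,2,3,4,9) t0 Ld \<tau>T]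
  show False
  proof (rule quad_obstruction[OF gc(1) _ _ exp hQ hK cQ cK])
    show "t0 + 0 *\<^sub>R \<tau> + h (t0 + 0 *\<^sub>R \<tau>) = y" using t0 by simp
    show "\<exists>\<delta>>0. \<forall>s. \<bar>s\<bar> < \<delta> \<longrightarrow> G (t0 + s *\<^sub>R \<tau> + h (t0 + s *\<^sub>R \<tau>)) = 0"
      using gc(2) G0 by blast
    show "Q (\<tau> + Ld \<tau>) \<noteq> 0" using Qv uw by simp
  qed
qed

lemma ind2_of_span_neq:
  assumes v: "v \<noteq> 0" and w: "w \<noteq> 0" and ne: "vec.span {v} \<noteq> vec.span {w}"
  shows "ind2 v w"
  unfolding ind2_def
proof (intro allI impI)
  fix \<alpha> \<beta> assume H: "\<alpha> *s v + \<beta> *s w = 0"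
  show "\<alpha> = 0 \<and> \<beta> = 0"
  proof (rule ccontr)
    assume nt: "\<not> (\<alpha> = 0 \<and> \<beta> = 0)"
    have b: "\<beta> \<noteq> 0"
    proof
      assume "\<beta> = 0" then have "\<alpha> *s v = 0" using H by simp
      then show False using nt \<open>\<beta> = 0\<close> v by (simp add: vec_eq_iff)
    qed
    have a: "\<alpha> \<noteq> 0"
    proof
      assume "\<alpha> = 0" then have "\<beta> *s w = 0" using H by simp
      then show False using b w by (simp add: vec_eq_iff)
    qed
    have Hc: "\<alpha> * v$i + \<beta> * w$i = 0" for i using arg_cong[OF H, of "\<lambda>x. x$i"] by simp
    have Hw: "\<beta> * w$i = - (\<alpha> * v$i)" for i using Hc[of i] by (simp add: eq_neg_iff_add_eq_0 add.commute)
    have Hv: "\<alpha> * v$i = - (\<beta> * w$i)" for i using Hc[of i] by (simp add: eq_neg_iff_add_eq_0)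
    have wv: "w = (- \<alpha> / \<beta>) *s v"
    proof -
      have "w$i = (- \<alpha> / \<beta>) * v$i" for i using Hw[of i] b by (simp add: field_simps)
      then show ?thesis by (simp add: vec_eq_iff)
    qed
    have vw: "v = (- \<beta> / \<alpha>) *s w"
    proof -
      have "v$i = (- \<beta> / \<alpha>) * w$i" for i using Hv[of i] a by (simp add: field_simps)
      then show ?thesis by (simp add: vec_eq_iff)
    qed
    have "w \<in> vec.span {v}" using wv unfolding sp1_iff by blast
    then have "vec.span {w} \<subseteq> vec.span {v}" using span1_sub[of "vec.span {v}" w] by simp
    moreover have "v \<in> vec.span {w}" using vw unfolding sp1_iff by blast
    then have "vec.span {v} \<subseteq> vec.span {w}" using span1_sub[of "vec.span {w}" v] by simp
    ultimately show False using ne by blast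
  qed
qed

lemma par_choice:
  assumes x: "x \<in> sp2 a b" "x \<noteq> 0" and i: "ind2 a b"
  shows "ind2 b x \<or> ind2 a x"
proof -
  obtain \<alpha> \<beta> where xe: "x = \<alpha> *s a + \<beta> *s b" using x(1) unfolding sp2_iff by blast
  have ii: "\<And>c d. c *s a + d *s b = 0 \<Longrightarrow> c = 0 \<and> d = 0" using i unfolding ind2_def by blast
  show ?thesis
  proof (cases "\<beta> = 0")
    case True
    then have "\<alpha> \<noteq> 0" using x xe by auto
    have "ind2 b x" unfolding ind2_def
    proof (intro allI impI)
      fix c d assume "c *s b + d *s x = 0"
      then have "(d * \<alpha>) *s a + c *s b = 0" using True xe by (simp add: vec_eq_iff algebra_simps)
      then show "c = 0 \<and> d = 0" using ii \<open>\<alpha> \<noteq> 0\<close> by fastforce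
    qed
    then show ?thesis by blast
  next
    case False
    have "ind2 a x" unfolding ind2_def
    proof (intro allI impI)
      fix c d assume "c *s a + d *s x = 0"
      then have "(c + d * \<alpha>) *s a + (d * \<beta>) *s b = 0" using xe by (simp add: vec_eq_iff algebra_simps)
      then have "c + d * \<alpha> = 0 \<and> d * \<beta> = 0" using ii by blast
      then show "c = 0 \<and> d = 0" using False by auto
    qed
    then show ?thesis by blast
  qed
qed

lemma chart2':
  fixes y :: "'n::finite frame"
  assumes lab: "distinct [V1,V2,V3,A1,B1,A2,B2,A3,B3,9,10,11]"
    and SSI: "\<And>z::'n frame. z \<in> SS \<longleftrightarrow> Inc V1 V2 V3 A1 B1 A2 B2 A3 B3 z"
    and y: "y \<in> SS" and n13: "sp2 (y$A1) (y$B1) \<noteq> sp2 (y$A3) (y$B3)" and n23: "sp2 (y$A2) (y$B2) \<noteq> sp2 (y$A3) (y$B3)"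
  shows "complex_submanifold_at SS y"
proof -
  have Iy: "Inc V1 V2 V3 A1 B1 A2 B2 A3 B3 y" using SSI y by blast
  have c1: "ind2 (y$B1) (y$V3) \<or> ind2 (y$A1) (y$V3)" using par_choice Iy unfolding Inc_def by blast
  have c2: "ind2 (y$B2) (y$V3) \<or> ind2 (y$A2) (y$V3)" using par_choice Iy unfolding Inc_def by blast
  have S1: "\<And>z::'n frame. z \<in> SS \<longleftrightarrow> Inc V1 V2 V3 B1 A1 A2 B2 A3 B3 z" using SSI Inc_swap1 by blast
  have S2: "\<And>z::'n frame. z \<in> SS \<longleftrightarrow> Inc V1 V2 V3 A1 B1 B2 A2 A3 B3 z" using SSI Inc_swap2 by blast
  have S12: "\<And>z::'n frame. z \<in> SS \<longleftrightarrow> Inc V1 V2 V3 B1 A1 B2 A2 A3 B3 z"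
    using S1 Inc_swap2[of V1 V2 V3 B1 A1 A2 B2 A3 B3] by blast
  have l1: "distinct [V1,V2,V3,B1,A1,A2,B2,A3,B3,9,10,11]" using lab by auto
  have l2: "distinct [V1,V2,V3,A1,B1,B2,A2,A3,B3,9,10,11]" using lab by auto
  have l12: "distinct [V1,V2,V3,B1,A1,B2,A2,A3,B3,9,10,11]" using lab by auto
  have n13': "sp2 (y$B1) (y$A1) \<noteq> sp2 (y$A3) (y$B3)" using n13 by (simp add: insert_commute)
  have n23': "sp2 (y$B2) (y$A2) \<noteq> sp2 (y$A3) (y$B3)" using n23 by (simp add: insert_commute)
  from c1 c2 show ?thesis
  proof (elim disjE)
    assume "ind2 (y$B1) (y$V3)" "ind2 (y$B2) (y$V3)"
    then show ?thesis using chart2[OF lab SSI y n13 n23] by blast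
  next
    assume "ind2 (y$B1) (y$V3)" "ind2 (y$A2) (y$V3)"
    then show ?thesis using chart2[OF l2 S2 y n13 n23'] by blast
  next
    assume "ind2 (y$A1) (y$V3)" "ind2 (y$B2) (y$V3)"
    then show ?thesis using chart2[OF l1 S1 y n13' n23] by blast
  next
    assume "ind2 (y$A1) (y$V3)" "ind2 (y$A2) (y$V3)"
    then show ?thesis using chart2[OF l12 S12 y n13' n23'] by blast
  qed
qed

definition frame_mk :: "complex^'n \<Rightarrow> complex^'n \<Rightarrow> complex^'n \<Rightarrow> complex^'n \<Rightarrow> complex^'n \<Rightarrow> complex^'n \<Rightarrow>
   complex^'n \<Rightarrow> complex^'n \<Rightarrow> complex^'n \<Rightarrow> complex^'n \<Rightarrow> complex^'n \<Rightarrow> complex^'n \<Rightarrow> 'n::finite frame" where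
  "frame_mk x0 x1 x2 x3 x4 x5 x6 x7 x8 x9 x10 x11 = (\<chi> m. if m = 0 then x0 else if m = 1 then x1 else if m = 2 then x2
     else if m = 3 then x3 else if m = 4 then x4 else if m = 5 then x5 else if m = 6 then x6 else if m = 7 then x7
     else if m = 8 then x8 else if m = 9 then x9 else if m = 10 then x10 else x11)"

lemma frame_exists:
  assumes "(p1,p2,p3,l1,l2,l3,P) \<in> (triangle_space :: 'n::finite triangle set)"
  shows "\<exists>y. y \<in> SS \<and> frame_proj y = (p1,p2,p3,l1,l2,l3,P)"
proof -
  have G: "p1 \<in> Grass 1" "p2 \<in> Grass 1" "p3 \<in> Grass 1" "l1 \<in> Grass 2" "l2 \<in> Grass 2" "l3 \<in> Grass 2" "P \<in> Grass 3"
    using assms unfolding triangle_space_def by auto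
  obtain x0 where x0: "x0 \<noteq> 0" "p1 = vec.span {x0}" using Grass1_E[OF G(1)] by blast
  obtain x1 where x1: "x1 \<noteq> 0" "p2 = vec.span {x1}" using Grass1_E[OF G(2)] by blast
  obtain x2 where x2: "x2 \<noteq> 0" "p3 = vec.span {x2}" using Grass1_E[OF G(3)] by blast
  obtain x3 x4 where x34: "ind2 x3 x4" "l1 = sp2 x3 x4" using Grass2_E[OF G(4)] by blast
  obtain x5 x6 where x56: "ind2 x5 x6" "l2 = sp2 x5 x6" using Grass2_E[OF G(5)] by blast
  obtain x7 x8 where x78: "ind2 x7 x8" "l3 = sp2 x7 x8" using Grass2_E[OF G(6)] by blast
  obtain x9 x10 x11 where xc: "ind3 x9 x10 x11" "P = sp3 x9 x10 x11" using Grass3_E[OF G(7)] by blast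
  define y where "y = frame_mk x0 x1 x2 x3 x4 x5 x6 x7 x8 x9 x10 x11"
  have yc: "y$0 = x0" "y$1 = x1" "y$2 = x2" "y$3 = x3" "y$4 = x4" "y$5 = x5" "y$6 = x6" "y$7 = x7" "y$8 = x8"
    "y$9 = x9" "y$10 = x10" "y$11 = x11" unfolding y_def frame_mk_def by simp_all
  have fp: "frame_proj y = (p1,p2,p3,l1,l2,l3,P)"
    unfolding frame_proj_def yc using x0 x1 x2 x34 x56 x78 xc by simp
  have "y \<in> frame_dom" unfolding frame_dom_iff yc using x0 x1 x2 x34 x56 x78 xc by simp
  then have "y \<in> SS" unfolding SS_def using fp assms by simp
  then show ?thesis using fp by blast
qed


theorem lemma2p7:
  assumes "CARD('n::finite) \<ge> 3"
  shows "(singular_locus :: 'n triangle set) =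
    {(p1,p2,p3,l1,l2,l3,P) \<in> triangle_space. p1 = p2 \<and> p2 = p3 \<and> l1 = l2 \<and> l2 = l3}"
proof -
  have SSeq: "{z \<in> frame_dom. frame_proj z \<in> triangle_space} = (SS :: 'n frame set)" unfolding SS_def ..
  have lab0: "distinct [0::12,1,2,3,4,5,6,7,8,9,10,11]" by simp
  have lab1: "distinct [1::12,2,0,5,6,7,8,3,4,9,10,11]" by simp
  have lab2: "distinct [2::12,0,1,7,8,3,4,5,6,9,10,11]" by simp
  have S1: "\<And>z::'n frame. z \<in> SS \<longleftrightarrow> Inc 1 2 0 5 6 7 8 3 4 z"
    using SS_Inc Inc_cyc[of 0 1 2 3 4 5 6 7 8] by blast
  have S2: "\<And>z::'n frame. z \<in> SS \<longleftrightarrow> Inc 2 0 1 7 8 3 4 5 6 z"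
    using S1 Inc_cyc[of 1 2 0 5 6 7 8 3 4] by blast
  have key: "smooth_point (p1,p2,p3,l1,l2,l3,P) \<longleftrightarrow> \<not> (p1 = p2 \<and> p2 = p3 \<and> l1 = l2 \<and> l2 = l3)"
    if tx: "(p1,p2,p3,l1,l2,l3,P) \<in> (triangle_space :: 'n triangle set)" for p1 p2 p3 l1 l2 l3 P
  proof
    assume sm: "smooth_point (p1,p2,p3,l1,l2,l3,P)"
    show "\<not> (p1 = p2 \<and> p2 = p3 \<and> l1 = l2 \<and> l2 = l3)"
    proof
      assume deg: "p1 = p2 \<and> p2 = p3 \<and> l1 = l2 \<and> l2 = l3"
      obtain y where y: "y \<in> frame_dom" "frame_proj y = (p1,p2,p3,l1,l2,l3,P)" "complex_submanifold_at SS y"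
        using sm unfolding smooth_point_def SSeq by blast
      have yS: "y \<in> SS" using y tx unfolding SS_def by simp
      have c: "vec.span {y$0} = p1" "vec.span {y$1} = p2" "vec.span {y$2} = p3"
        "sp2 (y$3) (y$4) = l1" "sp2 (y$5) (y$6) = l2" "sp2 (y$7) (y$8) = l3"
        using y(2) unfolding frame_proj_def by auto
      have "\<not> complex_submanifold_at SS y"
        by (rule singular[OF yS]) (use c deg in auto)
      then show False using y(3) by blast
    qed
  next
    assume nd: "\<not> (p1 = p2 \<and> p2 = p3 \<and> l1 = l2 \<and> l2 = l3)"
    obtain y where yS: "y \<in> SS" and fp: "frame_proj y = (p1,p2,p3,l1,l2,l3,P)" using frame_exists[OF tx] by blast
    have yD: "y \<in> frame_dom" using yS unfolding SS_def by simp
    have c: "vec.span {y$0} = p1" "vec.span {y$1} = p2" "vec.span {y$2} = p3"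
      "sp2 (y$3) (y$4) = l1" "sp2 (y$5) (y$6) = l2" "sp2 (y$7) (y$8) = l3"
      using fp unfolding frame_proj_def by auto
    have nz: "y$0 \<noteq> 0" "y$1 \<noteq> 0" "y$2 \<noteq> 0" using yS SS_Inc[of y] unfolding Inc_def by auto
    have ind: "ind2 (y$i) (y$j)" if "vec.span {y$i} \<noteq> vec.span {y$j}" "i \<in> {0,1,2}" "j \<in> {0,1,2}" for i j :: 12
      using ind2_of_span_neq[OF _ _ that(1)] nz that(2,3) by auto
    have "complex_submanifold_at SS y"
    proof -
      consider (A) "p3 \<noteq> p1 \<and> p3 \<noteq> p2" | (B) "p1 \<noteq> p2 \<and> p1 \<noteq> p3" | (C) "p2 \<noteq> p1 \<and> p2 \<noteq> p3"
        | (D) "l3 \<noteq> l1 \<and> l3 \<noteq> l2" | (E) "l1 \<noteq> l2 \<and> l1 \<noteq> l3" | (F) "l2 \<noteq> l1 \<and> l2 \<noteq> l3"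
        using nd by blast
      then show ?thesis
      proof cases
        case A
        then show ?thesis using chart1[OF lab0 SS_Inc yS] ind[of 2 0] ind[of 2 1] c by auto
      next
        case B
        then show ?thesis using chart1[OF lab1 S1 yS] ind[of 0 1] ind[of 0 2] c by auto
      next
        case C
        then show ?thesis using chart1[OF lab2 S2 yS] ind[of 1 2] ind[of 1 0] c by auto
      next
        case D
        then show ?thesis using chart2'[OF lab0 SS_Inc yS] c by auto
      next
        case E
        then show ?thesis using chart2'[OF lab1 S1 yS] c by auto
      next
        case F
        then show ?thesis using chart2'[OF lab2 S2 yS] c by auto
      qed
    qed
    then show "smooth_point (p1,p2,p3,l1,l2,l3,P)" unfolding smooth_point_def SSeq using yD fp by blast
  qed
  show ?thesis
  proof (rule set_eqI)
    fix x :: "'n triangle"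
    obtain p1 p2 p3 l1 l2 l3 P where x: "x = (p1,p2,p3,l1,l2,l3,P)" by (metis prod.exhaust)
    show "x \<in> singular_locus \<longleftrightarrow> x \<in> {(p1,p2,p3,l1,l2,l3,P) \<in> triangle_space. p1 = p2 \<and> p2 = p3 \<and> l1 = l2 \<and> l2 = l3}"
      unfolding singular_locus_def x using key[of p1 p2 p3 l1 l2 l3 P] by auto
  qed
qed

end
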